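(* Let $n\ge 3$ and let $(\alpha,\beta)$ satisfy $\beta\ge 0$, $0<\alpha+\beta<n-\beta$ and $\frac{n-\alpha-2\beta}{2n}+\frac{n-\alpha}{2(n-1)}<1$. For non-negative integers $l$ let $$A_l^{\{\alpha,\beta\}}=\frac{\Gamma(l+\frac{n-\alpha}2)^2}{\Gamma(l+\frac n2)^2}\int_0^1 d^{q-2}_{\alpha,\beta}(\sqrt t)(1-t)^{2(\beta+\alpha-1)}t^{\frac n2+l-1}F\Big(l+\frac{n+\alpha}2-1,\frac\alpha2;l+\frac n2;t\Big)^2\mathrm dt.$$ Then for sufficiently large $l$ and any $\epsilon>0$, $$A_l^{\{\alpha,\beta\}}=\begin{cases}O\big(l^{-(1+q(\alpha+\beta-1))}\big),&\alpha<1,\\ O\big(l^{-1-q\beta+\epsilon}\big),&\alpha=1,\\ O\big(l^{-1-q\beta}\big),&\alpha>1.\end{cases}$$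
   Context: $q=\frac{2n}{n-\alpha-2\beta}$. $F$ is the Gauss hypergeometric function. $d_{\alpha,\beta}(\xi)=\frac{\pi^{n/2}2^{1-\beta}}{\Gamma(n/2)}(1-|\xi|^2)^{\alpha+\beta-1}F\big(\frac{n+\alpha}{2}-1,\frac\alpha2;\frac n2;|\xi|^2\big)$ is radial on the unit ball and $d_{\alpha,\beta}(\sqrt t)$ denotes its value at radius $\sqrt t$. *)

theory Defs
  imports "HOL-Analysis.Analysis" "HOL-Library.Landau_Symbols"
begin

text \<open>Gauss hypergeometric function F(a,b;c;z), defined by its power series
  (convergent for |z| < 1, which is all that matters for the integrals below).\<close>
definition hypergeom :: "real \<Rightarrow> real \<Rightarrow> real \<Rightarrow> real \<Rightarrow> real" where
  "hypergeom a b c z =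
     (\<Sum>k. pochhammer a k * pochhammer b k / (pochhammer c k * fact k) * z ^ k)"

definition qexp :: "nat \<Rightarrow> real \<Rightarrow> real \<Rightarrow> real" where
  "qexp n \<alpha> \<beta> = 2 * real n / (real n - \<alpha> - 2 * \<beta>)"

text \<open>d_{alpha,beta} evaluated at radius r (it is radial).\<close>
definition d_ab :: "nat \<Rightarrow> real \<Rightarrow> real \<Rightarrow> real \<Rightarrow> real" where
  "d_ab n \<alpha> \<beta> r =
     pi powr (real n / 2) * 2 powr (1 - \<beta>) / Gamma (real n / 2)
     * (1 - r\<^sup>2) powr (\<alpha> + \<beta> - 1)
     * hypergeom ((real n + \<alpha>) / 2 - 1) (\<alpha> / 2) (real n / 2) (r\<^sup>2)"

definition A_coeff :: "nat \<Rightarrow> real \<Rightarrow> real \<Rightarrow> nat \<Rightarrow> real" where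
  "A_coeff n \<alpha> \<beta> l =
     Gamma (real l + (real n - \<alpha>) / 2) ^ 2 / Gamma (real l + real n / 2) ^ 2
     * integral {0..1} (\<lambda>t.
         d_ab n \<alpha> \<beta> (sqrt t) powr (qexp n \<alpha> \<beta> - 2)
         * (1 - t) powr (2 * (\<beta> + \<alpha> - 1))
         * t powr (real n / 2 + real l - 1)
         * (hypergeom (real l + (real n + \<alpha>) / 2 - 1) (\<alpha> / 2) (real l + real n / 2) t) ^ 2)"

end

theory Submission
  imports Defs
begin

lemma lnGamma_slopes:
  fixes z d :: real
  assumes z: "z > 0" and d: "d > 0"
  shows "d * ln z \<le> ln (Gamma (z + 1 + d)) - ln (Gamma (z + 1))"
    and "ln (Gamma (z + 1 + d)) - ln (Gamma (z + 1)) \<le> d * ln (z + 1 + d)"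
proof -
  let ?f = "ln \<circ> Gamma :: real \<Rightarrow> real"
  have cv: "convex_on {0<..} ?f" by (rule log_convex_Gamma_real)
  have G1: "Gamma (x + 1) = x * Gamma x" if "x > 0" for x :: real
    using that by (intro Gamma_plus1) (auto elim: nonpos_Ints_cases)
  have l1: "ln (Gamma (x + 1)) - ln (Gamma x) = ln x" if "x > 0" for x :: real
  proof -
    have "ln (x * Gamma x) = ln x + ln (Gamma x)" using that Gamma_real_pos[OF that] by (rule ln_mult_pos)
    then show ?thesis using G1[OF that] by simp
  qed
  have a: "(?f z - ?f (z+1)) / (z - (z+1)) \<le> (?f z - ?f (z+1+d)) / (z - (z+1+d))"
    by (rule convex_on_slope_le(1)[OF cv]) (use z d in auto)
  have b: "(?f z - ?f (z+1+d)) / (z - (z+1+d)) \<le> (?f (z+1) - ?f (z+1+d)) / ((z+1) - (z+1+d))"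
    by (rule convex_on_slope_le(2)[OF cv]) (use z d in auto)
  have "ln z \<le> (ln (Gamma (z + 1 + d)) - ln (Gamma (z + 1))) / d"
    using order_trans[OF a b] l1[OF z] d by (simp add: field_simps)
  then show "d * ln z \<le> ln (Gamma (z + 1 + d)) - ln (Gamma (z + 1))"
    using d by (simp add: field_simps)
  have a2: "(?f (z+1) - ?f (z+1+d)) / ((z+1) - (z+1+d)) \<le> (?f (z+1) - ?f (z+2+d)) / ((z+1) - (z+2+d))"
    by (rule convex_on_slope_le(1)[OF cv]) (use z d in auto)
  have b2: "(?f (z+1) - ?f (z+2+d)) / ((z+1) - (z+2+d)) \<le> (?f (z+1+d) - ?f (z+2+d)) / ((z+1+d) - (z+2+d))"
    by (rule convex_on_slope_le(2)[OF cv]) (use z d in auto)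
  have l2: "ln (Gamma (z + 2 + d)) - ln (Gamma (z + 1 + d)) = ln (z + 1 + d)"
    using l1[of "z+1+d"] z d by (simp add: add_ac)
  have "(ln (Gamma (z + 1 + d)) - ln (Gamma (z + 1))) / d \<le> ln (z + 1 + d)"
    using order_trans[OF a2 b2] l2 d by (simp add: field_simps)
  then show "ln (Gamma (z + 1 + d)) - ln (Gamma (z + 1)) \<le> d * ln (z + 1 + d)"
    using d by (simp add: field_simps)
qed

lemma Gamma_ratio_shift1:
  fixes z d :: real
  assumes z: "z > 0" and d: "d \<ge> 0"
  shows "z powr d \<le> Gamma (z + 1 + d) / Gamma (z + 1)"
    and "Gamma (z + 1 + d) / Gamma (z + 1) \<le> (z + 1 + d) powr d"
proof -
  have p1: "Gamma (z + 1 + d) > 0" "Gamma (z+1) > 0" using z d by auto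
  have eq: "Gamma (z + 1 + d) / Gamma (z + 1) = exp (ln (Gamma (z + 1 + d)) - ln (Gamma (z + 1)))"
    using p1 by (simp add: exp_diff)
  show "z powr d \<le> Gamma (z + 1 + d) / Gamma (z + 1)"
  proof (cases "d = 0")
    case True then show ?thesis using p1 by simp
  next
    case False
    then show ?thesis unfolding eq using lnGamma_slopes(1)[OF z, of d] d z
      by (simp add: powr_def)
  qed
  show "Gamma (z + 1 + d) / Gamma (z + 1) \<le> (z + 1 + d) powr d"
  proof (cases "d = 0")
    case True then show ?thesis using p1 z by simp
  next
    case False
    then show ?thesis unfolding eq using lnGamma_slopes(2)[OF z, of d] d z
      by (simp add: powr_def)
  qed
qed

lemma Gamma_ratio_pos_bounds:
  fixes z z0 d :: real
  assumes z0: "z0 > 0" and d: "d \<ge> 0" and z: "z \<ge> z0"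
  shows "(z0 / (z0 + d)) * z powr d \<le> Gamma (z + d) / Gamma z"
    and "Gamma (z + d) / Gamma z \<le> ((z0 + 1 + d) / z0) powr d * z powr d"
proof -
  have zp: "z > 0" using z z0 by linarith
  have G1: "Gamma (x + 1) = x * Gamma x" if "x > 0" for x :: real
    using that by (intro Gamma_plus1) (auto elim: nonpos_Ints_cases)
  have e1: "Gamma (z + 1 + d) = (z + d) * Gamma (z + d)" using G1[of "z+d"] zp d by (simp add: add_ac)
  have e2: "Gamma (z + 1) = z * Gamma z" using G1[of z] zp by simp
  have gp: "Gamma z > 0" "Gamma (z + d) > 0" using zp d by auto
  have eq: "Gamma (z + d) / Gamma z = (z / (z + d)) * (Gamma (z + 1 + d) / Gamma (z + 1))"
  proof -
    have "(z / (z + d)) * (((z + d) * Gamma (z + d)) / (z * Gamma z)) = ((z + d) * z * Gamma (z + d)) / ((z + d) * z * Gamma z)"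
      by (simp add: field_simps)
    also have "\<dots> = Gamma (z + d) / Gamma z" using zp d by (intro mult_divide_mult_cancel_left) auto
    finally show ?thesis unfolding e1 e2 by simp
  qed
  have r1: "z0 / (z0 + d) \<le> z / (z + d)"
  proof -
    have "z0 * d \<le> z * d" using z d by (simp add: mult_right_mono)
    moreover have "z0 + d > 0" "z + d > 0" using z0 zp d by auto
    ultimately show ?thesis by (simp add: divide_simps algebra_simps)
  qed
  have r2: "z / (z + d) \<le> 1" using zp d by simp
  have r0: "0 \<le> z0 / (z0 + d)" using z0 d by simp
  show "(z0 / (z0 + d)) * z powr d \<le> Gamma (z + d) / Gamma z"
    unfolding eq by (rule mult_mono[OF r1 Gamma_ratio_shift1(1)[OF zp d]]) (use zp d in auto)
  have "z + 1 + d \<le> ((z0 + 1 + d) / z0) * z"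
  proof -
    have "(1 + d) * z0 \<le> (1 + d) * z" using z d by (simp add: mult_left_mono)
    then have "z0 * (z + 1 + d) \<le> (z0 + 1 + d) * z" by (simp add: algebra_simps)
    then show ?thesis using z0 by (simp add: divide_simps mult.commute)
  qed
  then have "(z + 1 + d) powr d \<le> (((z0 + 1 + d) / z0) * z) powr d"
    using zp d by (intro powr_mono2) auto
  also have "\<dots> = ((z0 + 1 + d) / z0) powr d * z powr d"
    using z0 d zp by (subst powr_mult) auto
  finally have r3: "(z + 1 + d) powr d \<le> ((z0 + 1 + d) / z0) powr d * z powr d" .
  have "Gamma (z + d) / Gamma z \<le> 1 * (z + 1 + d) powr d"
    unfolding eq by (rule mult_mono[OF r2 Gamma_ratio_shift1(2)[OF zp d]]) (use zp d in auto)
  then show "Gamma (z + d) / Gamma z \<le> ((z0 + 1 + d) / z0) powr d * z powr d" using r3 by simp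
qed

lemma Gamma_ratio_bounds:
  fixes z0 d :: real
  assumes z0: "z0 > 0" and zd: "z0 + d > 0"
  shows "\<exists>K>0. \<forall>z\<ge>z0. Gamma (z + d) / Gamma z \<le> K * z powr d \<and> z powr d \<le> K * (Gamma (z + d) / Gamma z)"
proof (cases "d \<ge> 0")
  case True
  define K where "K = max (((z0 + 1 + d) / z0) powr d) ((z0 + d) / z0)"
  have Kp: "K > 0" unfolding K_def using z0 True by (auto simp: max_def)
  show ?thesis
  proof (intro exI[of _ K] conjI allI impI Kp)
    fix z assume z: "z \<ge> z0"
    have u: "Gamma (z + d) / Gamma z \<le> ((z0 + 1 + d) / z0) powr d * z powr d"
      by (rule Gamma_ratio_pos_bounds(2)[OF z0 True z])
    have "((z0 + 1 + d) / z0) powr d * z powr d \<le> K * z powr d"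
      unfolding K_def by (intro mult_right_mono) auto
    with u show "Gamma (z + d) / Gamma z \<le> K * z powr d" by linarith
    have l: "(z0 / (z0 + d)) * z powr d \<le> Gamma (z + d) / Gamma z"
      by (rule Gamma_ratio_pos_bounds(1)[OF z0 True z])
    have one: "((z0 + d) / z0) * (z0 / (z0 + d)) = 1" using z0 True by simp
    have "z powr d = ((z0 + d) / z0) * ((z0 / (z0 + d)) * z powr d)" by (simp only: mult.assoc[symmetric] one mult_1)
    also have "\<dots> \<le> ((z0 + d) / z0) * (Gamma (z + d) / Gamma z)"
      using l z0 True by (intro mult_left_mono) auto
    also have "\<dots> \<le> K * (Gamma (z + d) / Gamma z)"
      unfolding K_def using z z0 True by (intro mult_right_mono) (auto intro!: divide_nonneg_nonneg less_imp_le[OF Gamma_real_pos])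
    finally show "z powr d \<le> K * (Gamma (z + d) / Gamma z)" .
  qed
next
  case False
  define e where "e = - d"
  define w0 where "w0 = z0 + d"
  have e: "e > 0" using False e_def by auto
  have w0: "w0 > 0" using zd w0_def by auto
  define K where "K = max (((w0 + e) / w0) * (w0 / z0) powr (- e)) (((w0 + 1 + e) / w0) powr e)"
  have Kp: "K > 0" unfolding K_def using z0 w0 e by (auto simp: max_def)
  show ?thesis
  proof (intro exI[of _ K] conjI allI impI Kp)
    fix z assume z: "z \<ge> z0"
    define w where "w = z + d"
    have ww: "w \<ge> w0" unfolding w_def w0_def using z by simp
    have wp: "w > 0" using ww w0 by linarith
    have zp: "z > 0" using z z0 by linarith
    have zw: "z = w + e" unfolding w_def e_def by simp
    have Gp: "Gamma w > 0" "Gamma (w + e) > 0" using wp e by auto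
    have rat: "Gamma (z + d) / Gamma z = 1 / (Gamma (w + e) / Gamma w)"
      unfolding w_def[symmetric] zw using Gp by (simp add: e_def)
    have lo: "(w0 / (w0 + e)) * w powr e \<le> Gamma (w + e) / Gamma w"
      by (rule Gamma_ratio_pos_bounds(1)[OF w0 _ ww]) (use e in auto)
    have hi: "Gamma (w + e) / Gamma w \<le> ((w0 + 1 + e) / w0) powr e * w powr e"
      by (rule Gamma_ratio_pos_bounds(2)[OF w0 _ ww]) (use e in auto)
    have lop: "(w0 / (w0 + e)) * w powr e > 0" using w0 e wp by auto
    have "Gamma (z + d) / Gamma z \<le> 1 / ((w0 / (w0 + e)) * w powr e)"
    proof -
      have Rp: "0 < Gamma (w + e) / Gamma w" using Gp by simp
      show ?thesis unfolding rat by (rule divide_left_mono[OF lo zero_le_one mult_pos_pos[OF Rp lop]])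
    qed
    also have "\<dots> = ((w0 + e) / w0) * w powr (- e)"
      using w0 e wp by (simp add: powr_minus field_simps)
    also have "w powr (- e) \<le> (w0 / z0 * z) powr (- e)"
    proof -
      have "w0 / z0 * z \<le> w"
      proof -
        have "z0 * d \<ge> z * d" using z False by (simp add: mult_right_mono_neg)
        then have "w0 * z \<le> w * z0" unfolding w0_def w_def by (simp add: algebra_simps)
        then show ?thesis using z0 by (simp add: divide_simps mult.commute)
      qed
      moreover have "w0 / z0 * z > 0" using w0 z0 zp by simp
      ultimately show ?thesis using e by (intro powr_mono2') auto
    qed
    then have "((w0 + e) / w0) * w powr (- e) \<le> ((w0 + e) / w0) * (w0 / z0 * z) powr (- e)"
      using w0 e by (intro mult_left_mono) auto
    also have "\<dots> = ((w0 + e) / w0) * (w0 / z0) powr (- e) * z powr d"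
      using w0 z0 zp e_def by (subst powr_mult) auto
    also have "\<dots> \<le> K * z powr d" unfolding K_def by (intro mult_right_mono) auto
    finally show "Gamma (z + d) / Gamma z \<le> K * z powr d" by this
    have "Gamma (w + e) / Gamma w \<le> ((w0 + 1 + e) / w0) powr e * z powr e"
    proof -
      have "w powr e \<le> z powr e" using wp e zw by (intro powr_mono2) auto
      then show ?thesis using hi by (smt (verit) mult_left_mono powr_ge_zero)
    qed
    also have "\<dots> \<le> K * z powr e" unfolding K_def by (intro mult_right_mono) auto
    finally have A: "Gamma (w + e) / Gamma w \<le> K * z powr e" .
    have B: "Gamma (w + e) / Gamma w > 0" using Gp by simp
    have "z powr d = 1 / z powr e" using e_def zp by (simp add: powr_minus divide_inverse)
    also have "\<dots> \<le> K / (Gamma (w + e) / Gamma w)"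
    proof -
      have gen: "1 / z powr e \<le> K / R" if "0 < R" "R \<le> K * z powr e" for R
      proof -
        have zep: "z powr e > 0" using zp by simp
        show ?thesis using that zep by (simp add: divide_simps mult.commute)
      qed
      show ?thesis by (rule gen[OF B A])
    qed
    also have "\<dots> = K * (Gamma (z + d) / Gamma z)" unfolding rat by simp
    finally show "z powr d \<le> K * (Gamma (z + d) / Gamma z)" .
  qed
qed

lemma pos_not_nonpos_Int: "(x::real) > 0 \<Longrightarrow> x \<notin> \<int>\<^sub>\<le>\<^sub>0"
  by (auto elim: nonpos_Ints_cases)

lemma poch_Gamma_real: "(x::real) > 0 \<Longrightarrow> pochhammer x k = Gamma (x + real k) / Gamma x"
  using pochhammer_Gamma[OF pos_not_nonpos_Int] by simp

lemma poch_fact_bounds: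
  fixes p :: real
  assumes p: "p > 0"
  shows "\<exists>K>0. \<forall>k::nat. pochhammer p k / fact k \<le> K * (real k + 1) powr (p - 1)
                 \<and> (real k + 1) powr (p - 1) \<le> K * (pochhammer p k / fact k)"
proof -
  obtain K where K: "K > 0" and KB: "\<And>z. z \<ge> 1 \<Longrightarrow> Gamma (z + (p - 1)) / Gamma z \<le> K * z powr (p - 1) \<and> z powr (p - 1) \<le> K * (Gamma (z + (p - 1)) / Gamma z)"
    using Gamma_ratio_bounds[of 1 "p - 1"] p by auto
  have Gp: "Gamma p > 0" using p by simp
  define K' where "K' = max (K / Gamma p) (K * Gamma p)"
  have K'p: "K' > 0" unfolding K'_def using K Gp by (auto simp: max_def)
  show ?thesis
  proof (intro exI[of _ K'] conjI allI K'p)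
    fix k :: nat
    have eq: "pochhammer p k / fact k = (Gamma (real k + 1 + (p - 1)) / Gamma (real k + 1)) / Gamma p"
    proof -
      have "Gamma (1 + real k) = fact k" by (rule Gamma_fact)
      then have "fact k = Gamma (real k + 1)" by (simp add: add.commute)
      moreover have "pochhammer p k = Gamma (p + real k) / Gamma p" by (rule poch_Gamma_real[OF p])
      ultimately show ?thesis by (simp add: algebra_simps)
    qed
    have b: "Gamma (real k + 1 + (p - 1)) / Gamma (real k + 1) \<le> K * (real k + 1) powr (p - 1)"
       "(real k + 1) powr (p - 1) \<le> K * (Gamma (real k + 1 + (p - 1)) / Gamma (real k + 1))"
      using KB[of "real k + 1"] by auto
    have "pochhammer p k / fact k \<le> (K * (real k + 1) powr (p - 1)) / Gamma p"
      unfolding eq by (rule divide_right_mono[OF b(1)]) (use Gp in simp)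
    also have "\<dots> = (K / Gamma p) * (real k + 1) powr (p - 1)" by simp
    also have "\<dots> \<le> K' * (real k + 1) powr (p - 1)" unfolding K'_def by (intro mult_right_mono) auto
    finally show "pochhammer p k / fact k \<le> K' * (real k + 1) powr (p - 1)" .
    have "(real k + 1) powr (p - 1) \<le> K * (Gamma (real k + 1 + (p - 1)) / Gamma (real k + 1))" by (rule b(2))
    also have "\<dots> = (K * Gamma p) * (pochhammer p k / fact k)" unfolding eq using Gp by simp
    also have "\<dots> \<le> K' * (pochhammer p k / fact k)" unfolding K'_def
      by (intro mult_right_mono) (auto intro!: divide_nonneg_nonneg pochhammer_nonneg simp: p less_imp_le)
    finally show "(real k + 1) powr (p - 1) \<le> K' * (pochhammer p k / fact k)" .
  qed
qed

lemma poch_ratio_bound: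
  fixes c0 b :: real
  assumes c0: "c0 > 0" and a0: "c0 - 1 + b > 0"
  shows "\<exists>K>0. \<forall>c\<ge>c0. \<forall>k::nat. pochhammer (c - 1 + b) k / pochhammer c k \<le> K * ((c + real k) / c) powr (b - 1)"
proof -
  obtain K where K: "K > 0" and KB: "\<And>z. z \<ge> c0 \<Longrightarrow> Gamma (z + (b - 1)) / Gamma z \<le> K * z powr (b - 1) \<and> z powr (b - 1) \<le> K * (Gamma (z + (b - 1)) / Gamma z)"
    using Gamma_ratio_bounds[of c0 "b - 1"] c0 a0 by auto
  show ?thesis
  proof (intro exI[of _ "K * K"] conjI allI impI)
    show "K * K > 0" using K by simp
    fix c :: real and k :: nat assume c: "c \<ge> c0"
    have cp: "c > 0" using c c0 by linarith
    have ap: "c - 1 + b > 0" using c a0 by linarith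
    have eq: "pochhammer (c - 1 + b) k / pochhammer c k =
        (Gamma (c + real k + (b - 1)) / Gamma (c + real k)) * (Gamma c / Gamma (c + (b - 1)))"
    proof -
      have "pochhammer (c - 1 + b) k = Gamma (c - 1 + b + real k) / Gamma (c - 1 + b)" by (rule poch_Gamma_real[OF ap])
      moreover have "pochhammer c k = Gamma (c + real k) / Gamma c" by (rule poch_Gamma_real[OF cp])
      moreover have "Gamma c > 0" "Gamma (c + real k) > 0" "Gamma (c - 1 + b) > 0" using cp ap by auto
      ultimately show ?thesis by (simp add: algebra_simps)
    qed
    have b1: "Gamma (c + real k + (b - 1)) / Gamma (c + real k) \<le> K * (c + real k) powr (b - 1)"
      using KB[of "c + real k"] c by auto
    have b2: "c powr (b - 1) \<le> K * (Gamma (c + (b - 1)) / Gamma c)" using KB[of c] c by auto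
    have gp: "Gamma c > 0" "Gamma (c + (b - 1)) > 0" using cp ap by (auto simp: algebra_simps)
    have b2': "Gamma c / Gamma (c + (b - 1)) \<le> K * c powr (1 - b)"
    proof -
      have X: "Gamma c / Gamma (c + (b - 1)) * c powr (b - 1) \<le> K"
        using b2 gp by (simp add: divide_simps mult.commute)
      have one: "c powr (b - 1) * c powr (1 - b) = 1" using cp by (simp add: powr_add[symmetric])
      have "Gamma c / Gamma (c + (b - 1)) = (Gamma c / Gamma (c + (b - 1)) * c powr (b - 1)) * c powr (1 - b)"
        by (simp only: mult.assoc one mult_1_right)
      also have "\<dots> \<le> K * c powr (1 - b)"
        by (rule mult_right_mono[OF X]) simp
      finally show ?thesis .
    qed
    have "pochhammer (c - 1 + b) k / pochhammer c k \<le> (K * (c + real k) powr (b - 1)) * (K * c powr (1 - b))"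
      unfolding eq by (intro mult_mono b1 b2') (use gp K in auto)
    also have "\<dots> = K * K * ((c + real k) powr (b - 1) * c powr (1 - b))" by simp
    also have "(c + real k) powr (b - 1) * c powr (1 - b) = ((c + real k) / c) powr (b - 1)"
    proof -
      have "c powr (1 - b) = inverse (c powr (b - 1))" using powr_minus[of c "b - 1"] by simp
      moreover have "((c + real k) / c) powr (b - 1) = (c + real k) powr (b - 1) / c powr (b - 1)"
        using cp by (simp add: powr_divide)
      ultimately show ?thesis by (simp add: divide_inverse)
    qed
    finally show "pochhammer (c - 1 + b) k / pochhammer c k \<le> K * K * ((c + real k) / c) powr (b - 1)" .
  qed
qed

lemma binom_series:
  fixes p t :: real
  assumes t: "0 \<le> t" "t < 1"
  shows "(\<lambda>k. pochhammer p k / fact k * t ^ k) sums ((1 - t) powr (- p))"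
proof -
  have "\<bar>- t\<bar> < 1" using t by simp
  from gen_binomial_real[OF this, of "- p"]
  have A: "(\<lambda>k. ((- p) gchoose k) * (- t) ^ k) sums (1 + - t) powr (- p)" .
  have B: "((- p) gchoose k) * (- t) ^ k = pochhammer p k / fact k * t ^ k" for k
  proof -
    have e1: "((- p) gchoose k) = (- 1) ^ k * (pochhammer p k / fact k)"
      using gbinomial_pochhammer[of "- p" k] by simp
    have e2: "(- t) ^ k = (- 1) ^ k * t ^ k" by (rule power_minus)
    have e3: "(- 1 :: real) ^ k * (- 1) ^ k = 1" by (simp add: power_mult_distrib[symmetric])
    have "((- p) gchoose k) * (- t) ^ k = ((- 1) ^ k * (- 1) ^ k) * (pochhammer p k / fact k * t ^ k)"
      unfolding e1 e2 by (simp only: mult_ac)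
    then show ?thesis unfolding e3 by simp
  qed
  show ?thesis using A unfolding B by simp
qed

definition hcoef :: "real \<Rightarrow> real \<Rightarrow> real \<Rightarrow> nat \<Rightarrow> real" where
  "hcoef a b c k = pochhammer a k * pochhammer b k / (pochhammer c k * fact k)"

lemma hypergeom_hcoef: "hypergeom a b c z = (\<Sum>k. hcoef a b c k * z ^ k)"
  unfolding hypergeom_def hcoef_def ..

lemma HBgen:
  fixes c0 b th1 th2 :: real
  assumes c0: "c0 > 0" and b: "b > 0" and a0: "c0 - 1 + b > 0"
    and th1: "b - th1 > 0" and th2: "b - th2 > 0"
  shows "\<exists>K>0. \<forall>c t M1 M2. c \<ge> c0 \<longrightarrow> 0 \<le> t \<longrightarrow> t < 1 \<longrightarrow> M1 \<ge> 0 \<longrightarrow> M2 \<ge> 0 \<longrightarrow>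
     (\<forall>k::nat. ((c + real k) / c) powr (b - 1) \<le> M1 * (real k + 1) powr (- th1) + M2 * (real k + 1) powr (- th2)) \<longrightarrow>
     1 \<le> hypergeom (c - 1 + b) b c t \<and>
     hypergeom (c - 1 + b) b c t \<le> K * (M1 * (1 - t) powr (th1 - b) + M2 * (1 - t) powr (th2 - b))"
proof -
  obtain K0 where K0: "K0 > 0" and K0B': "\<forall>c\<ge>c0. \<forall>k::nat. pochhammer (c - 1 + b) k / pochhammer c k \<le> K0 * ((c + real k) / c) powr (b - 1)"
    using poch_ratio_bound[OF c0 a0] by (elim exE conjE) (rule that)
  have K0B: "\<And>c k. c \<ge> c0 \<Longrightarrow> pochhammer (c - 1 + b) k / pochhammer c k \<le> K0 * ((c + real k) / c) powr (b - 1)"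
    using K0B' by simp
  obtain Kb where Kb: "Kb > 0" and KbB': "\<forall>k::nat. pochhammer b k / fact k \<le> Kb * (real k + 1) powr (b - 1)"
    using poch_fact_bounds[OF b] by (elim exE conjE) (rule that, assumption, blast)
  have KbB: "\<And>k. pochhammer b k / fact k \<le> Kb * (real k + 1) powr (b - 1)" using KbB' by blast
  obtain K1 where K1: "K1 > 0" and K1B': "\<forall>k::nat. (real k + 1) powr (b - th1 - 1) \<le> K1 * (pochhammer (b - th1) k / fact k)"
    using poch_fact_bounds[OF th1] by (elim exE conjE) (rule that, assumption, blast)
  have K1B: "\<And>k. (real k + 1) powr (b - th1 - 1) \<le> K1 * (pochhammer (b - th1) k / fact k)" using K1B' by blast
  obtain K2 where K2: "K2 > 0" and K2B': "\<forall>k::nat. (real k + 1) powr (b - th2 - 1) \<le> K2 * (pochhammer (b - th2) k / fact k)"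
    using poch_fact_bounds[OF th2] by (elim exE conjE) (rule that, assumption, blast)
  have K2B: "\<And>k. (real k + 1) powr (b - th2 - 1) \<le> K2 * (pochhammer (b - th2) k / fact k)" using K2B' by blast
  define K where "K = K0 * Kb * max K1 K2"
  have Kp: "K > 0" unfolding K_def using K0 Kb K1 K2 by (simp add: max_def)
  show ?thesis
  proof (intro exI[of _ K] conjI allI impI Kp)
    fix c t M1 M2 :: real
    assume c: "c \<ge> c0" and t0: "0 \<le> t" and t1: "t < 1" and M1: "M1 \<ge> 0" and M2: "M2 \<ge> 0"
      and Mb: "\<forall>k::nat. ((c + real k) / c) powr (b - 1) \<le> M1 * (real k + 1) powr (- th1) + M2 * (real k + 1) powr (- th2)"
    have cp: "c > 0" using c c0 by linarith
    have ap: "c - 1 + b > 0" using c a0 by linarith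
    define u where "u k = hcoef (c - 1 + b) b c k * t ^ k" for k
    define v where "v k = K0 * Kb * (M1 * K1 * (pochhammer (b - th1) k / fact k * t ^ k) + M2 * K2 * (pochhammer (b - th2) k / fact k * t ^ k))" for k
    have u0: "u k \<ge> 0" for k
      unfolding u_def hcoef_def using cp ap b t0
      by (intro mult_nonneg_nonneg divide_nonneg_nonneg pochhammer_nonneg) auto
    have uv: "u k \<le> v k" for k
    proof -
      have pb: "pochhammer b k / fact k \<ge> 0" using b by (intro divide_nonneg_nonneg pochhammer_nonneg) auto
      have tk: "t ^ k \<ge> 0" using t0 by simp
      have "u k = (pochhammer (c - 1 + b) k / pochhammer c k) * (pochhammer b k / fact k) * t ^ k"
        unfolding u_def hcoef_def by simp
      also have "\<dots> \<le> (K0 * ((c + real k) / c) powr (b - 1)) * (pochhammer b k / fact k) * t ^ k"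
        by (rule mult_right_mono[OF mult_right_mono[OF K0B[OF c] pb] tk])
      also have "\<dots> \<le> (K0 * (M1 * (real k + 1) powr (- th1) + M2 * (real k + 1) powr (- th2))) * (pochhammer b k / fact k) * t ^ k"
        by (rule mult_right_mono[OF mult_right_mono[OF mult_left_mono[OF Mb[rule_format]] pb] tk]) (use K0 in simp)
      also have "\<dots> = K0 * (M1 * ((pochhammer b k / fact k) * (real k + 1) powr (- th1)) + M2 * ((pochhammer b k / fact k) * (real k + 1) powr (- th2))) * t ^ k"
        by (simp add: algebra_simps)
      also have "\<dots> \<le> K0 * (M1 * (Kb * K1 * (pochhammer (b - th1) k / fact k)) + M2 * (Kb * K2 * (pochhammer (b - th2) k / fact k))) * t ^ k"
      proof -
        have gen: "(pochhammer b k / fact k) * (real k + 1) powr (- th) \<le> Kb * K' * (pochhammer (b - th) k / fact k)"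
          if KB': "(real k + 1) powr (b - th - 1) \<le> K' * (pochhammer (b - th) k / fact k)" for th K'
        proof -
          have "(pochhammer b k / fact k) * (real k + 1) powr (- th) \<le> (Kb * (real k + 1) powr (b - 1)) * (real k + 1) powr (- th)"
            by (intro mult_right_mono KbB) simp
          also have "\<dots> = Kb * (real k + 1) powr (b - th - 1)"
            by (simp add: powr_add[symmetric] mult.assoc algebra_simps)
          also have "\<dots> \<le> Kb * (K' * (pochhammer (b - th) k / fact k))"
            using KB' Kb by (intro mult_left_mono) auto
          finally show ?thesis by (simp add: mult.assoc)
        qed
        show ?thesis
          by (rule mult_right_mono[OF mult_left_mono[OF add_mono[OF mult_left_mono[OF gen[OF K1B] M1] mult_left_mono[OF gen[OF K2B] M2]]] tk]) (use K0 in simp)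
      qed
      also have "\<dots> = v k" unfolding v_def by (simp add: algebra_simps)
      finally show ?thesis .
    qed
    have s1: "(\<lambda>k. pochhammer (b - th1) k / fact k * t ^ k) sums ((1 - t) powr (- (b - th1)))"
      by (rule binom_series[OF t0 t1])
    have s2: "(\<lambda>k. pochhammer (b - th2) k / fact k * t ^ k) sums ((1 - t) powr (- (b - th2)))"
      by (rule binom_series[OF t0 t1])
    have vs: "v sums (K0 * Kb * (M1 * K1 * (1 - t) powr (- (b - th1)) + M2 * K2 * (1 - t) powr (- (b - th2))))"
      unfolding v_def by (rule sums_mult[OF sums_add[OF sums_mult[OF s1, of "M1 * K1"] sums_mult[OF s2, of "M2 * K2"]], of "K0 * Kb"])
    have vsum: "summable v" using vs by (rule sums_summable)
    have us: "summable u"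
    proof (rule summable_comparison_test'[OF vsum])
      show "norm (u n) \<le> v n" if "n \<ge> 0" for n using u0[of n] uv[of n] by simp
    qed
    have "suminf u \<le> suminf v" by (rule suminf_le[OF uv us vsum])
    also have "suminf v = K0 * Kb * (M1 * K1 * (1 - t) powr (th1 - b) + M2 * K2 * (1 - t) powr (th2 - b))"
      using vs by (simp add: sums_iff)
    also have "\<dots> \<le> K * (M1 * (1 - t) powr (th1 - b) + M2 * (1 - t) powr (th2 - b))"
    proof -
      have "M1 * K1 * (1 - t) powr (th1 - b) \<le> max K1 K2 * (M1 * (1 - t) powr (th1 - b))"
        using mult_right_mono[OF max.cobounded1[of K1 K2], of "M1 * (1 - t) powr (th1 - b)"] M1 by (simp add: mult_ac)
      moreover have "M2 * K2 * (1 - t) powr (th2 - b) \<le> max K1 K2 * (M2 * (1 - t) powr (th2 - b))"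
        using mult_right_mono[OF max.cobounded2[of K2 K1], of "M2 * (1 - t) powr (th2 - b)"] M2 by (simp add: mult_ac)
      ultimately have "M1 * K1 * (1 - t) powr (th1 - b) + M2 * K2 * (1 - t) powr (th2 - b) \<le> max K1 K2 * (M1 * (1 - t) powr (th1 - b) + M2 * (1 - t) powr (th2 - b))"
        by (simp add: algebra_simps)
      then have "K0 * Kb * (M1 * K1 * (1 - t) powr (th1 - b) + M2 * K2 * (1 - t) powr (th2 - b)) \<le> K0 * Kb * (max K1 K2 * (M1 * (1 - t) powr (th1 - b) + M2 * (1 - t) powr (th2 - b)))"
        by (rule mult_left_mono) (use K0 Kb in simp)
      then show ?thesis unfolding K_def by (simp only: mult.assoc)
    qed
    finally have up: "suminf u \<le> K * (M1 * (1 - t) powr (th1 - b) + M2 * (1 - t) powr (th2 - b))" .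
    have hu: "hypergeom (c - 1 + b) b c t = suminf u" unfolding hypergeom_hcoef u_def ..
    have "sum u {0} \<le> suminf u" by (rule sum_le_suminf[OF us]) (simp_all add: u0)
    moreover have "u 0 = 1" unfolding u_def hcoef_def by simp
    ultimately show "1 \<le> hypergeom (c - 1 + b) b c t" unfolding hu by simp
    show "hypergeom (c - 1 + b) b c t \<le> K * (M1 * (1 - t) powr (th1 - b) + M2 * (1 - t) powr (th2 - b))"
      unfolding hu by (rule up)
  qed
qed

lemma ratio_powr_le1:
  fixes c b th :: real
  assumes c: "c \<ge> 1" and th0: "0 \<le> th" and th1: "th \<le> 1 - b"
  shows "((c + real k) / c) powr (b - 1) \<le> c powr th * (real k + 1) powr (- th)"
proof -
  have cp: "c > 0" using c by simp
  have x1: "(c + real k) / c \<ge> 1" using cp by simp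
  have "((c + real k) / c) powr (b - 1) \<le> ((c + real k) / c) powr (- th)"
    using x1 th1 by (intro powr_mono) auto
  also have "((c + real k) / c) powr (- th) = (c / (c + real k)) powr th"
  proof -
    have ck: "c + real k > 0" using cp by simp
    have "((c + real k) / c) powr (- th) = inverse ((c + real k) powr th / c powr th)"
      using cp ck by (simp add: powr_minus powr_divide)
    also have "\<dots> = c powr th / (c + real k) powr th" by simp
    also have "\<dots> = (c / (c + real k)) powr th" using cp ck by (simp add: powr_divide)
    finally show ?thesis .
  qed
  also have "\<dots> \<le> (c / (real k + 1)) powr th"
  proof (rule powr_mono2[OF th0])
    show "0 \<le> c / (c + real k)" using cp by simp
    show "c / (c + real k) \<le> c / (real k + 1)" using c cp by (intro divide_left_mono) auto
  qed
  also have "\<dots> = c powr th * (real k + 1) powr (- th)"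
  proof -
    have "(c / (real k + 1)) powr th = c powr th / (real k + 1) powr th" using cp by (simp add: powr_divide)
    then show ?thesis by (simp add: powr_minus divide_inverse)
  qed
  finally show ?thesis .
qed

lemma ratio_powr_le2:
  fixes c b :: real
  assumes cp: "c > 0" and b: "b \<ge> 1"
  shows "((c + real k) / c) powr (b - 1) \<le> 2 powr (b - 1) * 1 * (real k + 1) powr (- 0) + 2 powr (b - 1) * c powr (1 - b) * (real k + 1) powr (- (1 - b))"
proof -
  define y where "y = (real k + 1) / c"
  have y0: "y > 0" unfolding y_def using cp by simp
  have "(c + real k) / c \<le> 2 * max 1 y"
  proof -
    have "(c + real k) / c = 1 + real k / c" using cp by (simp add: field_simps)
    also have "\<dots> \<le> 1 + y" unfolding y_def using cp by (intro add_left_mono divide_right_mono) auto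
    also have "\<dots> \<le> 2 * max 1 y" by (simp add: max_def)
    finally show ?thesis .
  qed
  then have "((c + real k) / c) powr (b - 1) \<le> (2 * max 1 y) powr (b - 1)"
    using cp b by (intro powr_mono2) auto
  also have "\<dots> = 2 powr (b - 1) * (max 1 y) powr (b - 1)" using y0 by (subst powr_mult) auto
  also have "(max 1 y) powr (b - 1) \<le> 1 + y powr (b - 1)"
    using y0 b by (cases "y \<le> 1") (auto simp: max_def intro: add_increasing)
  then have "2 powr (b - 1) * (max 1 y) powr (b - 1) \<le> 2 powr (b - 1) * (1 + y powr (b - 1))"
    by (intro mult_left_mono) auto
  also have "y powr (b - 1) = c powr (1 - b) * (real k + 1) powr (- (1 - b))"
  proof -
    have "y powr (b - 1) = (real k + 1) powr (b - 1) / c powr (b - 1)" unfolding y_def using cp by (simp add: powr_divide)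
    moreover have "c powr (1 - b) = inverse (c powr (b - 1))" using powr_minus[of c "b - 1"] by simp
    moreover have "(real k + 1) powr (- (1 - b)) = (real k + 1) powr (b - 1)" by simp
    ultimately show ?thesis by (simp add: divide_inverse mult.commute)
  qed
  finally show ?thesis by (simp add: algebra_simps)
qed

lemma FB1:
  fixes c0 b th :: real
  assumes c0: "c0 \<ge> 1" and b: "b > 0" and thb: "th < b" and th0: "0 \<le> th" and th1: "th \<le> 1 - b"
  shows "\<exists>K>0. \<forall>c t. c \<ge> c0 \<longrightarrow> 0 \<le> t \<longrightarrow> t < 1 \<longrightarrow>
     1 \<le> hypergeom (c - 1 + b) b c t \<and> hypergeom (c - 1 + b) b c t \<le> K * c powr th * (1 - t) powr (th - b)"
proof -
  obtain K where K: "K > 0" and KB: "\<forall>c t M1 M2. c \<ge> c0 \<longrightarrow> 0 \<le> t \<longrightarrow> t < 1 \<longrightarrow> M1 \<ge> 0 \<longrightarrow> M2 \<ge> 0 \<longrightarrow>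
     (\<forall>k::nat. ((c + real k) / c) powr (b - 1) \<le> M1 * (real k + 1) powr (- th) + M2 * (real k + 1) powr (- th)) \<longrightarrow>
     1 \<le> hypergeom (c - 1 + b) b c t \<and>
     hypergeom (c - 1 + b) b c t \<le> K * (M1 * (1 - t) powr (th - b) + M2 * (1 - t) powr (th - b))"
    using HBgen[of c0 b th th] c0 b thb by auto
  show ?thesis
  proof (intro exI[of _ K] conjI allI impI K)
    fix c t :: real assume c: "c \<ge> c0" and t0: "0 \<le> t" and t1: "t < 1"
    have "\<forall>k::nat. ((c + real k) / c) powr (b - 1) \<le> c powr th * (real k + 1) powr (- th) + 0 * (real k + 1) powr (- th)"
      using ratio_powr_le1[of c th b] c c0 th0 th1 by simp
    then have "1 \<le> hypergeom (c - 1 + b) b c t \<and>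
     hypergeom (c - 1 + b) b c t \<le> K * (c powr th * (1 - t) powr (th - b) + 0 * (1 - t) powr (th - b))"
      using KB[rule_format, of c t "c powr th" 0] c t0 t1 by simp
    then show "1 \<le> hypergeom (c - 1 + b) b c t" "hypergeom (c - 1 + b) b c t \<le> K * c powr th * (1 - t) powr (th - b)"
      by (simp_all add: mult.assoc)
  qed
qed

lemma FB2:
  fixes c0 b :: real
  assumes c0: "c0 \<ge> 1" and b: "b > 1/2"
  shows "\<exists>K>0. \<forall>c t. c \<ge> c0 \<longrightarrow> 0 \<le> t \<longrightarrow> t < 1 \<longrightarrow>
     1 \<le> hypergeom (c - 1 + b) b c t \<and>
     hypergeom (c - 1 + b) b c t \<le> K * ((1 - t) powr (- b) + c powr (1 - b) * (1 - t) powr (1 - 2 * b))"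
proof (cases "b < 1")
  case True
  obtain K where K: "K > 0" and KB: "\<forall>c t. c \<ge> c0 \<longrightarrow> 0 \<le> t \<longrightarrow> t < 1 \<longrightarrow>
     1 \<le> hypergeom (c - 1 + b) b c t \<and> hypergeom (c - 1 + b) b c t \<le> K * c powr (1 - b) * (1 - t) powr ((1 - b) - b)"
    using FB1[of c0 b "1 - b"] c0 b True by auto
  show ?thesis
  proof (intro exI[of _ K] conjI allI impI K)
    fix c t :: real assume c: "c \<ge> c0" and t0: "0 \<le> t" and t1: "t < 1"
    show "1 \<le> hypergeom (c - 1 + b) b c t" using KB c t0 t1 by blast
    have "hypergeom (c - 1 + b) b c t \<le> K * c powr (1 - b) * (1 - t) powr ((1 - b) - b)" using KB c t0 t1 by blast
    also have "\<dots> = K * (c powr (1 - b) * (1 - t) powr (1 - 2 * b))" by (simp add: mult.assoc)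
    also have "\<dots> \<le> K * ((1 - t) powr (- b) + c powr (1 - b) * (1 - t) powr (1 - 2 * b))"
      using K by (intro mult_left_mono) auto
    finally show "hypergeom (c - 1 + b) b c t \<le> K * ((1 - t) powr (- b) + c powr (1 - b) * (1 - t) powr (1 - 2 * b))" .
  qed
next
  case False
  then have b1: "b \<ge> 1" by simp
  obtain K where K: "K > 0" and KB: "\<forall>c t M1 M2. c \<ge> c0 \<longrightarrow> 0 \<le> t \<longrightarrow> t < 1 \<longrightarrow> M1 \<ge> 0 \<longrightarrow> M2 \<ge> 0 \<longrightarrow>
     (\<forall>k::nat. ((c + real k) / c) powr (b - 1) \<le> M1 * (real k + 1) powr (- 0) + M2 * (real k + 1) powr (- (1 - b))) \<longrightarrow>
     1 \<le> hypergeom (c - 1 + b) b c t \<and>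
     hypergeom (c - 1 + b) b c t \<le> K * (M1 * (1 - t) powr (0 - b) + M2 * (1 - t) powr ((1 - b) - b))"
    using HBgen[of c0 b 0 "1 - b"] c0 b b1 by auto
  show ?thesis
  proof (intro exI[of _ "K * 2 powr (b - 1)"] conjI allI impI)
    show "K * 2 powr (b - 1) > 0" using K by simp
    fix c t :: real assume c: "c \<ge> c0" and t0: "0 \<le> t" and t1: "t < 1"
    have cp: "c > 0" using c c0 by simp
    have M: "\<forall>k::nat. ((c + real k) / c) powr (b - 1) \<le> (2 powr (b - 1) * 1) * (real k + 1) powr (- 0) + (2 powr (b - 1) * c powr (1 - b)) * (real k + 1) powr (- (1 - b))"
      using ratio_powr_le2[OF cp b1] by simp
    have R: "1 \<le> hypergeom (c - 1 + b) b c t \<and>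
      hypergeom (c - 1 + b) b c t \<le> K * ((2 powr (b - 1) * 1) * (1 - t) powr (0 - b) + (2 powr (b - 1) * c powr (1 - b)) * (1 - t) powr ((1 - b) - b))"
      using KB c t0 t1 M by (meson powr_ge_zero mult_nonneg_nonneg zero_le_one)
    then show "1 \<le> hypergeom (c - 1 + b) b c t" by blast
    have "K * ((2 powr (b - 1) * 1) * (1 - t) powr (0 - b) + (2 powr (b - 1) * c powr (1 - b)) * (1 - t) powr ((1 - b) - b))
        = K * 2 powr (b - 1) * ((1 - t) powr (- b) + c powr (1 - b) * (1 - t) powr (1 - 2 * b))"
      by (simp add: algebra_simps)
    then show "hypergeom (c - 1 + b) b c t \<le> K * 2 powr (b - 1) * ((1 - t) powr (- b) + c powr (1 - b) * (1 - t) powr (1 - 2 * b))"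
      using R by linarith
  qed
qed

lemma HBbdd:
  fixes c0 b :: real
  assumes c0: "c0 \<ge> 1" and b: "b > 0" and b2: "2 * b < 1"
  shows "\<exists>K>0. \<forall>t. 0 \<le> t \<longrightarrow> t < 1 \<longrightarrow> 1 \<le> hypergeom (c0 - 1 + b) b c0 t \<and> hypergeom (c0 - 1 + b) b c0 t \<le> K"
proof -
  have c0p: "c0 > 0" using c0 by simp
  have a0: "c0 - 1 + b > 0" using c0 b by simp
  obtain K0 where K0: "K0 > 0" and K0B': "\<forall>c\<ge>c0. \<forall>k::nat. pochhammer (c - 1 + b) k / pochhammer c k \<le> K0 * ((c + real k) / c) powr (b - 1)"
    using poch_ratio_bound[OF c0p a0] by (elim exE conjE) (rule that)
  obtain Kb where Kb: "Kb > 0" and KbB': "\<forall>k::nat. pochhammer b k / fact k \<le> Kb * (real k + 1) powr (b - 1) \<and> (real k + 1) powr (b - 1) \<le> Kb * (pochhammer b k / fact k)"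
    using poch_fact_bounds[OF b] by (elim exE conjE) (rule that)
  define w where "w k = K0 * Kb * c0 powr (1 - b) * (real k + 1) powr (2 * b - 2)" for k
  have ws: "summable w"
  proof -
    have "summable (\<lambda>n. real n powr (2 * b - 2))" using b2 by (subst summable_real_powr_iff) simp
    then have "summable (\<lambda>k. real (Suc k) powr (2 * b - 2))" by (subst summable_Suc_iff)
    then have "summable (\<lambda>k. (real k + 1) powr (2 * b - 2))" by (simp add: add.commute)
    then show ?thesis unfolding w_def by (intro summable_mult)
  qed
  show ?thesis
  proof (intro exI[of _ "suminf w"] conjI allI impI)
    have "0 < w 0" unfolding w_def using K0 Kb c0p by simp
    moreover have "sum w {0} \<le> suminf w" using ws by (rule sum_le_suminf) (auto simp: w_def K0 Kb c0p less_imp_le)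
    ultimately show "suminf w > 0" by simp
    fix t :: real assume t0: "0 \<le> t" and t1: "t < 1"
    define u where "u k = hcoef (c0 - 1 + b) b c0 k * t ^ k" for k
    have u0: "u k \<ge> 0" for k
      unfolding u_def hcoef_def using c0p a0 b t0
      by (intro mult_nonneg_nonneg divide_nonneg_nonneg pochhammer_nonneg) auto
    have uw: "u k \<le> w k" for k
    proof -
      have pb: "pochhammer b k / fact k \<ge> 0" using b by (intro divide_nonneg_nonneg pochhammer_nonneg) auto
      have tk: "t ^ k \<le> 1" using t0 t1 by (simp add: power_le_one)
      have r0: "0 \<le> pochhammer (c0 - 1 + b) k / pochhammer c0 k" using a0 c0p
        by (intro divide_nonneg_nonneg pochhammer_nonneg) auto
      have "u k = (pochhammer (c0 - 1 + b) k / pochhammer c0 k) * (pochhammer b k / fact k) * t ^ k"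
        unfolding u_def hcoef_def by simp
      also have "\<dots> \<le> (pochhammer (c0 - 1 + b) k / pochhammer c0 k) * (pochhammer b k / fact k) * 1"
        by (rule mult_left_mono[OF tk mult_nonneg_nonneg[OF r0 pb]])
      also have "\<dots> \<le> (K0 * ((c0 + real k) / c0) powr (b - 1)) * (Kb * (real k + 1) powr (b - 1))"
      proof -
        have A: "pochhammer (c0 - 1 + b) k / pochhammer c0 k \<le> K0 * ((c0 + real k) / c0) powr (b - 1)"
          using K0B' by simp
        have B: "pochhammer b k / fact k \<le> Kb * (real k + 1) powr (b - 1)" using KbB' by blast
        show ?thesis unfolding mult_1_right by (rule mult_mono[OF A B]) (use K0 pb in simp_all)
      qed
      also have "((c0 + real k) / c0) powr (b - 1) \<le> c0 powr (1 - b) * (real k + 1) powr (- (1 - b))"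
        by (rule ratio_powr_le1[OF c0]) (use b2 in auto)
      then have "(K0 * ((c0 + real k) / c0) powr (b - 1)) * (Kb * (real k + 1) powr (b - 1))
          \<le> (K0 * (c0 powr (1 - b) * (real k + 1) powr (- (1 - b)))) * (Kb * (real k + 1) powr (b - 1))"
        using K0 Kb by (intro mult_right_mono mult_left_mono) auto
      also have "\<dots> = w k" unfolding w_def
        by (simp add: powr_add[symmetric] mult_ac)
      finally show ?thesis .
    qed
    have us: "summable u"
    proof (rule summable_comparison_test'[OF ws])
      show "norm (u n) \<le> w n" if "n \<ge> 0" for n using u0[of n] uw[of n] by simp
    qed
    have hu: "hypergeom (c0 - 1 + b) b c0 t = suminf u" unfolding hypergeom_hcoef u_def ..
    have "sum u {0} \<le> suminf u" by (rule sum_le_suminf[OF us]) (simp_all add: u0)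
    moreover have "u 0 = 1" unfolding u_def hcoef_def by simp
    ultimately show "1 \<le> hypergeom (c0 - 1 + b) b c0 t" unfolding hu by simp
    show "hypergeom (c0 - 1 + b) b c0 t \<le> suminf w" unfolding hu by (rule suminf_le[OF uw us ws])
  qed
qed

lemma poch_nonneg0: "(x::real) \<ge> 0 \<Longrightarrow> pochhammer x n \<ge> 0"
  by (induction n) (auto simp: pochhammer_Suc intro!: mult_nonneg_nonneg add_nonneg_nonneg)

lemma abs_poch_le: "\<bar>pochhammer (b::real) k\<bar> \<le> pochhammer \<bar>b\<bar> k"
proof (induction k)
  case 0 then show ?case by simp
next
  case (Suc k)
  have "\<bar>pochhammer b (Suc k)\<bar> = \<bar>pochhammer b k\<bar> * \<bar>b + real k\<bar>"
    by (simp add: pochhammer_Suc abs_mult)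
  also have "\<dots> \<le> pochhammer \<bar>b\<bar> k * (\<bar>b\<bar> + real k)"
    by (rule mult_mono[OF Suc.IH]) (simp_all add: poch_nonneg0)
  also have "\<dots> = pochhammer \<bar>b\<bar> (Suc k)" by (simp add: pochhammer_Suc)
  finally show ?case .
qed

lemma beta_moment:
  fixes a v :: real
  assumes a: "a > 0" and v: "v > 0"
  shows "((\<lambda>x. x powr (a - 1) * (1 - x) powr (v - 1) * x ^ k) has_integral Beta (a + real k) v) {0..1}"
proof -
  have "((\<lambda>x. x powr (a + real k - 1) * (1 - x) powr (v - 1)) has_integral Beta (a + real k) v) {0..1}"
    by (rule has_integral_Beta_real) (use a v in auto)
  moreover have "x powr (a + real k - 1) * (1 - x) powr (v - 1) = x powr (a - 1) * (1 - x) powr (v - 1) * x ^ k"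
    if "x \<in> {0..1}" for x
  proof (cases "x = 0")
    case True then show ?thesis by simp
  next
    case False
    then have xp: "x > 0" using that by auto
    have "x powr (a + real k - 1) = x powr ((a - 1) + real k)" by (simp add: algebra_simps)
    also have "\<dots> = x powr (a - 1) * x powr (real k)" by (rule powr_add)
    also have "x powr (real k) = x ^ k" using xp by (simp add: powr_realpow)
    finally show ?thesis by (simp add: mult_ac)
  qed
  ultimately show ?thesis by (subst (asm) has_integral_cong) auto
qed

lemma beta_ratio_poch:
  fixes a v :: real
  assumes a: "a > 0" and v: "v > 0"
  shows "Beta (a + real k) v = Beta a v * (pochhammer a k / pochhammer (a + v) k)"
proof -
  have g: "Gamma a > 0" "Gamma v > 0" "Gamma (a + v) > 0" "Gamma (a + real k) > 0" "Gamma (a + v + real k) > 0"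
    using a v by auto
  have "pochhammer a k = Gamma (a + real k) / Gamma a" by (rule poch_Gamma_real[OF a])
  moreover have "pochhammer (a + v) k = Gamma (a + v + real k) / Gamma (a + v)" by (rule poch_Gamma_real) (use a v in simp)
  ultimately show ?thesis unfolding Beta_def using g by (simp add: field_simps)
qed

lemma euler_rep:
  fixes a v b t :: real
  assumes a: "a > 0" and v: "v > 0" and t0: "0 \<le> t" and t1: "t < 1"
  shows "(\<lambda>x. x powr (a - 1) * (1 - x) powr (v - 1) * (1 - t * x) powr (- b)) integrable_on {0..1}"
    and "hypergeom a b (a + v) t = integral {0..1} (\<lambda>x. x powr (a - 1) * (1 - x) powr (v - 1) * (1 - t * x) powr (- b)) / Beta a v"
proof -
  define W where "W x = x powr (a - 1) * (1 - x) powr (v - 1)" for x :: real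
  define f where "f N x = W x * (\<Sum>k<N. pochhammer b k / fact k * (t * x) ^ k)" for N x
  define g where "g x = W x * (1 - t * x) powr (- b)" for x
  define h where "h x = W x * (1 - t) powr (- \<bar>b\<bar>)" for x
  define S where "S N = (\<Sum>k<N. hcoef a b (a + v) k * t ^ k)" for N
  have Bp: "Beta a v > 0" using a v by (simp add: Beta_def)
  have W0: "W x \<ge> 0" for x unfolding W_def by simp
  have Wint: "(W has_integral Beta a v) {0..1}" unfolding W_def by (rule has_integral_Beta_real[OF a v])
  have fint: "(f N has_integral (Beta a v * S N)) {0..1}" for N
  proof -
    have e: "f N x = (\<Sum>k<N. (pochhammer b k / fact k * t ^ k) * (W x * x ^ k))" for x
      unfolding f_def by (simp add: sum_distrib_left power_mult_distrib mult_ac)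
    have "((\<lambda>x. \<Sum>k<N. (pochhammer b k / fact k * t ^ k) * (W x * x ^ k)) has_integral
           (\<Sum>k<N. (pochhammer b k / fact k * t ^ k) * Beta (a + real k) v)) {0..1}"
    proof (rule has_integral_sum)
      fix k assume "k \<in> {..<N}"
      have "((\<lambda>x. W x * x ^ k) has_integral Beta (a + real k) v) {0..1}"
        unfolding W_def by (rule beta_moment[OF a v])
      then show "((\<lambda>x. (pochhammer b k / fact k * t ^ k) * (W x * x ^ k)) has_integral
           (pochhammer b k / fact k * t ^ k) * Beta (a + real k) v) {0..1}"
        by (rule has_integral_mult_right)
    qed simp
    moreover have "(\<Sum>k<N. (pochhammer b k / fact k * t ^ k) * Beta (a + real k) v) = Beta a v * S N"
      unfolding S_def sum_distrib_left
    proof (rule sum.cong[OF refl])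
      fix k assume "k \<in> {..<N}"
      show "pochhammer b k / fact k * t ^ k * Beta (a + real k) v = Beta a v * (hcoef a b (a + v) k * t ^ k)"
        unfolding beta_ratio_poch[OF a v] hcoef_def by (simp add: field_simps)
    qed
    ultimately show ?thesis unfolding e by simp
  qed
  have hint: "(h has_integral (Beta a v * (1 - t) powr (- \<bar>b\<bar>))) {0..1}"
    unfolding h_def by (rule has_integral_mult_left[OF Wint])
  have bound: "norm (f N x) \<le> h x" if "x \<in> {0..1}" for N x
  proof -
    have x: "0 \<le> x" "x \<le> 1" using that by auto
    have "\<bar>\<Sum>k<N. pochhammer b k / fact k * (t * x) ^ k\<bar> \<le> (\<Sum>k<N. \<bar>pochhammer b k / fact k * (t * x) ^ k\<bar>)"
      by (rule sum_abs)
    also have "\<dots> \<le> (\<Sum>k<N. pochhammer \<bar>b\<bar> k / fact k * t ^ k)"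
    proof (rule sum_mono)
      fix k assume "k \<in> {..<N}"
      have "\<bar>pochhammer b k / fact k * (t * x) ^ k\<bar> = \<bar>pochhammer b k\<bar> / fact k * (t * x) ^ k"
        using t0 x by (simp add: abs_mult)
      also have "\<dots> \<le> pochhammer \<bar>b\<bar> k / fact k * t ^ k"
      proof (rule mult_mono)
        show "\<bar>pochhammer b k\<bar> / fact k \<le> pochhammer \<bar>b\<bar> k / fact k"
          by (rule divide_right_mono[OF abs_poch_le]) simp
        show "(t * x) ^ k \<le> t ^ k" using t0 x by (intro power_mono) (auto simp: mult_left_le)
        show "0 \<le> pochhammer \<bar>b\<bar> k / fact k" by (simp add: poch_nonneg0)
        show "0 \<le> (t * x) ^ k" using t0 x by simp
      qed
      finally show "\<bar>pochhammer b k / fact k * (t * x) ^ k\<bar> \<le> pochhammer \<bar>b\<bar> k / fact k * t ^ k" .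
    qed
    also have "\<dots> \<le> (1 - t) powr (- \<bar>b\<bar>)"
    proof -
      have s: "(\<lambda>k. pochhammer \<bar>b\<bar> k / fact k * t ^ k) sums ((1 - t) powr (- \<bar>b\<bar>))"
        by (rule binom_series[OF t0 t1])
      have "(\<Sum>k<N. pochhammer \<bar>b\<bar> k / fact k * t ^ k) \<le> suminf (\<lambda>k. pochhammer \<bar>b\<bar> k / fact k * t ^ k)"
        by (rule sum_le_suminf[OF sums_summable[OF s]]) (auto intro!: mult_nonneg_nonneg divide_nonneg_nonneg poch_nonneg0 simp: t0)
      then show ?thesis using s by (simp add: sums_iff)
    qed
    finally have A: "\<bar>\<Sum>k<N. pochhammer b k / fact k * (t * x) ^ k\<bar> \<le> (1 - t) powr (- \<bar>b\<bar>)" .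
    have "norm (f N x) = W x * \<bar>\<Sum>k<N. pochhammer b k / fact k * (t * x) ^ k\<bar>"
      unfolding f_def using W0[of x] by (simp add: abs_mult)
    also have "\<dots> \<le> W x * (1 - t) powr (- \<bar>b\<bar>)" by (rule mult_left_mono[OF A W0])
    finally show ?thesis unfolding h_def .
  qed
  have conv: "(\<lambda>N. f N x) \<longlonglongrightarrow> g x" if "x \<in> {0..1}" for x
  proof -
    have x0: "0 \<le> x" "x \<le> 1" using that by auto
    have "t * x \<le> t" using x0 t0 by (simp add: mult_left_le)
    then have x: "0 \<le> t * x" "t * x < 1" using x0 t0 t1 by auto
    have "(\<lambda>k. pochhammer b k / fact k * (t * x) ^ k) sums ((1 - t * x) powr (- b))"
      by (rule binom_series[OF x])
    then have "(\<lambda>N. \<Sum>k<N. pochhammer b k / fact k * (t * x) ^ k) \<longlonglongrightarrow> (1 - t * x) powr (- b)"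
      by (simp add: sums_def)
    then show ?thesis unfolding f_def g_def by (intro tendsto_mult_left)
  qed
  have DC: "g integrable_on {0..1}" "(\<lambda>N. integral {0..1} (f N)) \<longlonglongrightarrow> integral {0..1} g"
    using dominated_convergence[of f "{0..1}" h g] fint hint bound conv by (auto simp: has_integral_integrable)
  then show "(\<lambda>x. x powr (a - 1) * (1 - x) powr (v - 1) * (1 - t * x) powr (- b)) integrable_on {0..1}"
    unfolding g_def W_def by simp
  have "(\<lambda>N. integral {0..1} (f N)) = (\<lambda>N. Beta a v * S N)" using fint by (auto simp: integral_unique)
  with DC(2) have "(\<lambda>N. Beta a v * S N) \<longlonglongrightarrow> integral {0..1} g" by simp
  then have "(\<lambda>N. (Beta a v * S N) / Beta a v) \<longlonglongrightarrow> integral {0..1} g / Beta a v"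
    by (intro tendsto_divide tendsto_const) (use Bp in auto)
  then have "S \<longlonglongrightarrow> integral {0..1} g / Beta a v" using Bp by simp
  then have "(\<lambda>k. hcoef a b (a + v) k * t ^ k) sums (integral {0..1} g / Beta a v)"
    unfolding sums_def S_def .
  then show "hypergeom a b (a + v) t = integral {0..1} (\<lambda>x. x powr (a - 1) * (1 - x) powr (v - 1) * (1 - t * x) powr (- b)) / Beta a v"
    unfolding hypergeom_hcoef g_def W_def by (simp add: sums_iff)
qed

lemma FB3:
  fixes c0 b :: real
  assumes c0: "c0 > 0" and b: "b \<le> 0" and a0: "c0 - 1 + b > 0"
  shows "\<exists>K>0. \<forall>c t. c \<ge> c0 \<longrightarrow> 0 \<le> t \<longrightarrow> t < 1 \<longrightarrow>
     (1 - t) powr (- b) \<le> hypergeom (c - 1 + b) b c t \<and> hypergeom (c - 1 + b) b c t \<le> 1 \<and>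
     hypergeom (c - 1 + b) b c t \<le> K * ((1 - t) powr (- b) + c powr b)"
proof -
  define m where "m = - b"
  have m0: "m \<ge> 0" unfolding m_def using b by simp
  obtain K1 where K1: "K1 > 0" and K1B: "\<forall>z\<ge>c0. Gamma (z + m) / Gamma z \<le> K1 * z powr m \<and> z powr m \<le> K1 * (Gamma (z + m) / Gamma z)"
  proof -
    have "c0 + m > 0" using c0 m0 by simp
    from Gamma_ratio_bounds[OF c0 this] show ?thesis by (elim exE conjE) (rule that)
  qed
  define v where "v = 1 - b"
  have v: "v > 0" unfolding v_def using b by simp
  define C where "C = Gamma (v + m) / Gamma v"
  have Cp: "C > 0" unfolding C_def using v m0 by simp
  define K where "K = 2 powr m * max 1 (C * K1)"
  have Kp: "K > 0" unfolding K_def by (simp add: max_def)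
  show ?thesis
  proof (intro exI[of _ K] allI impI conjI Kp)
    fix c t :: real assume c: "c \<ge> c0" and t0: "0 \<le> t" and t1: "t < 1"
    define a where "a = c - 1 + b"
    have a: "a > 0" unfolding a_def using c a0 by simp
    have cp: "c > 0" using c c0 by simp
    have av: "a + v = c" unfolding a_def v_def by simp
    define W where "W x = x powr (a - 1) * (1 - x) powr (v - 1)" for x :: real
    define I where "I = integral {0..1} (\<lambda>x. W x * (1 - t * x) powr (- b))"
    have Bp: "Beta a v > 0" using a v by (simp add: Beta_def)
    have gi: "(\<lambda>x. W x * (1 - t * x) powr (- b)) integrable_on {0..1}"
      unfolding W_def by (rule euler_rep(1)[OF a v t0 t1])
    have hyp: "hypergeom (c - 1 + b) b c t = I / Beta a v"
      unfolding I_def W_def a_def[symmetric] using euler_rep(2)[OF a v t0 t1] av by simp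
    have Wint: "(W has_integral Beta a v) {0..1}" unfolding W_def by (rule has_integral_Beta_real[OF a v])
    have W0: "W x \<ge> 0" for x unfolding W_def by simp
    have tx: "1 - t \<le> 1 - t * x" "1 - t * x \<le> 1" "0 < 1 - t * x" if "x \<in> {0..1}" for x
    proof -
      have x: "0 \<le> x" "x \<le> 1" using that by auto
      have "t * x \<le> t" using x t0 by (simp add: mult_left_le)
      then show "1 - t \<le> 1 - t * x" "0 < 1 - t * x" using t1 by auto
      show "1 - t * x \<le> 1" using x t0 by simp
    qed
    have "Beta a v * (1 - t) powr m \<le> I"
    proof -
      have "((\<lambda>x. W x * (1 - t) powr m) has_integral Beta a v * (1 - t) powr m) {0..1}"
        by (rule has_integral_mult_left[OF Wint])
      moreover have "((\<lambda>x. W x * (1 - t * x) powr (- b)) has_integral I) {0..1}"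
        unfolding I_def using gi by (rule integrable_integral)
      moreover have "W x * (1 - t) powr m \<le> W x * (1 - t * x) powr (- b)" if "x \<in> {0..1}" for x
        unfolding m_def using tx[OF that] t1 b by (intro mult_left_mono W0 powr_mono2) auto
      ultimately show ?thesis by (rule has_integral_le)
    qed
    then show "(1 - t) powr (- b) \<le> hypergeom (c - 1 + b) b c t"
      unfolding hyp m_def using Bp by (simp add: field_simps)
    have "I \<le> Beta a v"
    proof -
      have A: "((\<lambda>x. W x * (1 - t * x) powr (- b)) has_integral I) {0..1}"
        unfolding I_def using gi by (rule integrable_integral)
      have B: "W x * (1 - t * x) powr (- b) \<le> W x" if "x \<in> {0..1}" for x
      proof -
        have "(1 - t * x) powr (- b) \<le> 1" using tx[OF that] b powr_mono2[of "- b" "1 - t * x" 1] by simp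
        then show ?thesis using W0[of x] by (simp add: mult_left_le)
      qed
      show ?thesis by (rule has_integral_le[OF A Wint B])
    qed
    then show "hypergeom (c - 1 + b) b c t \<le> 1" unfolding hyp using Bp by simp
    have Wm: "((\<lambda>x. W x * (1 - x) powr m) has_integral Beta a (v + m)) {0..1}"
    proof -
      have "((\<lambda>x. x powr (a - 1) * (1 - x) powr (v + m - 1)) has_integral Beta a (v + m)) {0..1}"
        by (rule has_integral_Beta_real) (use a v m0 in auto)
      moreover have "x powr (a - 1) * (1 - x) powr (v + m - 1) = W x * (1 - x) powr m" if "x \<in> {0..1}" for x
      proof (cases "x = 1")
        case True then show ?thesis unfolding W_def by simp
      next
        case False
        then have "1 - x > 0" using that by auto
        then have "(1 - x) powr (v + m - 1) = (1 - x) powr (v - 1) * (1 - x) powr m"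
          by (simp add: powr_add[symmetric] algebra_simps)
        then show ?thesis unfolding W_def by (simp add: mult_ac)
      qed
      ultimately show ?thesis by (subst (asm) has_integral_cong) auto
    qed
    have "I \<le> 2 powr m * (Beta a v * (1 - t) powr m + Beta a (v + m))"
    proof -
      have "((\<lambda>x. W x * (1 - t * x) powr (- b)) has_integral I) {0..1}"
        unfolding I_def using gi by (rule integrable_integral)
      moreover have "((\<lambda>x. 2 powr m * (W x * (1 - t) powr m + W x * (1 - x) powr m)) has_integral
            2 powr m * (Beta a v * (1 - t) powr m + Beta a (v + m))) {0..1}"
        by (intro has_integral_mult_right has_integral_add has_integral_mult_left Wint Wm)
      moreover have "W x * (1 - t * x) powr (- b) \<le> 2 powr m * (W x * (1 - t) powr m + W x * (1 - x) powr m)"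
        if "x \<in> {0..1}" for x
      proof -
        have x: "0 \<le> x" "x \<le> 1" using that by auto
        have "1 - t * x \<le> (1 - t) + (1 - x)" using mult_nonneg_nonneg[of "1 - t" "1 - x"] x t1 by (simp add: algebra_simps)
        also have "\<dots> \<le> 2 * max (1 - t) (1 - x)" by (simp add: max_def)
        finally have le: "1 - t * x \<le> 2 * max (1 - t) (1 - x)" .
        have "(1 - t * x) powr m \<le> (2 * max (1 - t) (1 - x)) powr m"
          using tx[OF that] m0 le by (intro powr_mono2) auto
        also have "\<dots> = 2 powr m * (max (1 - t) (1 - x)) powr m"
          using t1 x by (subst powr_mult) auto
        also have "(max (1 - t) (1 - x)) powr m \<le> (1 - t) powr m + (1 - x) powr m"
          by (simp add: max_def)
        then have "2 powr m * (max (1 - t) (1 - x)) powr m \<le> 2 powr m * ((1 - t) powr m + (1 - x) powr m)"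
          by (intro mult_left_mono) auto
        finally have "(1 - t * x) powr m \<le> 2 powr m * ((1 - t) powr m + (1 - x) powr m)" .
        then have "W x * (1 - t * x) powr m \<le> W x * (2 powr m * ((1 - t) powr m + (1 - x) powr m))"
          by (rule mult_left_mono[OF _ W0])
        then show ?thesis unfolding m_def by (simp add: algebra_simps)
      qed
      ultimately show ?thesis by (rule has_integral_le)
    qed
    then have h1: "hypergeom (c - 1 + b) b c t \<le> 2 powr m * ((1 - t) powr m + Beta a (v + m) / Beta a v)"
      unfolding hyp using Bp by (simp add: field_simps)
    have "Beta a (v + m) / Beta a v = C * (Gamma c / Gamma (c + m))"
    proof -
      have g: "Gamma a > 0" "Gamma v > 0" "Gamma c > 0" "Gamma (c + m) > 0" "Gamma (v + m) > 0"
        using a v cp m0 by auto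
      have e: "a + (v + m) = c + m" using av by simp
      show ?thesis unfolding Beta_def C_def av e using g by (simp add: field_simps)
    qed
    also have "\<dots> \<le> C * (K1 * c powr b)"
    proof (rule mult_left_mono)
      have "c powr m \<le> K1 * (Gamma (c + m) / Gamma c)" using K1B c by blast
      moreover have "Gamma c > 0" "Gamma (c + m) > 0" using cp m0 by auto
      ultimately have "Gamma c / Gamma (c + m) * c powr m \<le> K1" by (simp add: divide_simps mult.commute)
      moreover have "c powr m * c powr b = 1" unfolding m_def using cp by (simp add: powr_add[symmetric])
      ultimately show "Gamma c / Gamma (c + m) \<le> K1 * c powr b"
        by (metis mult.assoc mult.right_neutral mult_right_mono powr_ge_zero)
    qed (use Cp in simp)
    finally have h2: "Beta a (v + m) / Beta a v \<le> C * K1 * c powr b" by (simp add: mult.assoc)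
    have "hypergeom (c - 1 + b) b c t \<le> 2 powr m * ((1 - t) powr m + C * K1 * c powr b)"
      using h1 h2 by (smt (verit) mult_left_mono powr_ge_zero)
    also have "\<dots> \<le> 2 powr m * (max 1 (C * K1) * ((1 - t) powr m + c powr b))"
    proof (rule mult_left_mono)
      have "(1 - t) powr m \<le> max 1 (C * K1) * (1 - t) powr m" by (simp add: mult_le_cancel_right1 )
      moreover have "C * K1 * c powr b \<le> max 1 (C * K1) * c powr b" by (intro mult_right_mono) auto
      ultimately show "(1 - t) powr m + C * K1 * c powr b \<le> max 1 (C * K1) * ((1 - t) powr m + c powr b)"
        by (simp add: algebra_simps)
    qed simp
    finally show "hypergeom (c - 1 + b) b c t \<le> K * ((1 - t) powr (- b) + c powr b)"
      unfolding K_def m_def by (simp add: mult.assoc)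
  qed
qed

lemma GA:
  fixes f :: "real \<Rightarrow> real" and L M1 M2 p1 p2 :: real
  assumes L: "L > -1" and p1: "p1 > -1" and p2: "p2 > -1" and M1: "M1 \<ge> 0" and M2: "M2 \<ge> 0"
    and bound: "\<And>t. t \<in> {0..1} \<Longrightarrow> \<bar>f t\<bar> \<le> M1 * (t powr L * (1 - t) powr p1) + M2 * (t powr L * (1 - t) powr p2)"
  shows "\<bar>integral {0..1} f\<bar> \<le> M1 * Beta (L + 1) (p1 + 1) + M2 * Beta (L + 1) (p2 + 1)"
proof -
  define g where "g t = M1 * (t powr L * (1 - t) powr p1) + M2 * (t powr L * (1 - t) powr p2)" for t :: real
  have b1: "((\<lambda>t. t powr L * (1 - t) powr p1) has_integral Beta (L + 1) (p1 + 1)) {0..1}"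
    using has_integral_Beta_real[of "L + 1" "p1 + 1"] L p1 by simp
  have b2: "((\<lambda>t. t powr L * (1 - t) powr p2) has_integral Beta (L + 1) (p2 + 1)) {0..1}"
    using has_integral_Beta_real[of "L + 1" "p2 + 1"] L p2 by simp
  have gi: "(g has_integral (M1 * Beta (L + 1) (p1 + 1) + M2 * Beta (L + 1) (p2 + 1))) {0..1}"
    unfolding g_def by (intro has_integral_add has_integral_mult_right b1 b2)
  have Bnn: "Beta (L + 1) (p1 + 1) \<ge> 0" "Beta (L + 1) (p2 + 1) \<ge> 0"
    using L p1 p2 by (auto simp: Beta_def intro!: divide_nonneg_nonneg mult_nonneg_nonneg less_imp_le[OF Gamma_real_pos])
  show ?thesis
  proof (cases "f integrable_on {0..1}")
    case True
    have ng: "((\<lambda>t. - g t) has_integral - (M1 * Beta (L + 1) (p1 + 1) + M2 * Beta (L + 1) (p2 + 1))) {0..1}"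
      by (rule has_integral_neg[OF gi])
    have fi: "(f has_integral integral {0..1} f) {0..1}" using True by (rule integrable_integral)
    have u: "integral {0..1} f \<le> M1 * Beta (L + 1) (p1 + 1) + M2 * Beta (L + 1) (p2 + 1)"
      by (rule has_integral_le[OF fi gi]) (use bound in \<open>auto simp: g_def abs_le_iff\<close>)
    have l: "- (M1 * Beta (L + 1) (p1 + 1) + M2 * Beta (L + 1) (p2 + 1)) \<le> integral {0..1} f"
    proof (rule has_integral_le[OF ng fi])
      fix x :: real assume "x \<in> {0..1}"
      from bound[OF this] show "- g x \<le> f x" unfolding g_def by linarith
    qed
    show ?thesis using u l by linarith
  next
    case False
    then have "integral {0..1} f = 0" by (rule not_integrable_integral)
    then show ?thesis using M1 M2 Bnn by simp
  qed
qed

lemma BB: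
  fixes p x0 :: real
  assumes p: "p > -1" and x0: "x0 > 0"
  shows "\<exists>K>0. \<forall>x\<ge>x0. Beta x (p + 1) \<le> K * x powr (- (p + 1))"
proof -
  have "x0 + (p + 1) > 0" using p x0 by simp
  from Gamma_ratio_bounds[OF x0 this] obtain K where K: "K > 0" and
    KB: "\<forall>z\<ge>x0. Gamma (z + (p + 1)) / Gamma z \<le> K * z powr (p + 1) \<and> z powr (p + 1) \<le> K * (Gamma (z + (p + 1)) / Gamma z)"
    by (elim exE conjE) (rule that)
  have Gp: "Gamma (p + 1) > 0" using p by simp
  show ?thesis
  proof (intro exI[of _ "K * Gamma (p + 1)"] conjI allI impI)
    show "K * Gamma (p + 1) > 0" using K Gp by simp
    fix x assume x: "x \<ge> x0"
    have xp: "x > 0" using x x0 by simp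
    have g: "Gamma x > 0" "Gamma (x + (p + 1)) > 0" using xp p by auto
    have A: "x powr (p + 1) \<le> K * (Gamma (x + (p + 1)) / Gamma x)" using KB x by blast
    have B: "Gamma x / Gamma (x + (p + 1)) * x powr (p + 1) \<le> K"
      using A g by (simp add: divide_simps mult.commute)
    have one: "x powr (p + 1) * x powr (- (p + 1)) = 1" using xp by (simp add: powr_add[symmetric])
    have C: "Gamma x / Gamma (x + (p + 1)) \<le> K * x powr (- (p + 1))"
    proof -
      have "Gamma x / Gamma (x + (p + 1)) = (Gamma x / Gamma (x + (p + 1)) * x powr (p + 1)) * x powr (- (p + 1))"
        by (simp only: mult.assoc one mult_1_right)
      also have "\<dots> \<le> K * x powr (- (p + 1))" by (rule mult_right_mono[OF B]) simp
      finally show ?thesis .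
    qed
    have "Beta x (p + 1) = Gamma (p + 1) * (Gamma x / Gamma (x + (p + 1)))" unfolding Beta_def by simp
    also have "\<dots> \<le> Gamma (p + 1) * (K * x powr (- (p + 1)))" by (rule mult_left_mono[OF C]) (use Gp in simp)
    finally show "Beta x (p + 1) \<le> K * Gamma (p + 1) * x powr (- (p + 1))" by (simp add: mult_ac)
  qed
qed

lemma shift_powr:
  fixes x s e :: real
  assumes s: "s \<ge> 0" and x: "x \<ge> 1"
  shows "(x + s) powr e \<le> (1 + s) powr \<bar>e\<bar> * x powr e"
proof (cases "e \<ge> 0")
  case True
  have "x + s \<le> (1 + s) * x" using s x by (simp add: algebra_simps mult_left_mono[of 1 x s, simplified])
  then have "(x + s) powr e \<le> ((1 + s) * x) powr e" using s x True by (intro powr_mono2) auto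
  also have "\<dots> = (1 + s) powr e * x powr e" using s x by (subst powr_mult) auto
  finally show ?thesis using True by simp
next
  case False
  have "(x + s) powr e \<le> x powr e" using s x False by (intro powr_mono2') auto
  also have "\<dots> \<le> (1 + s) powr \<bar>e\<bar> * x powr e"
  proof -
    have "1 \<le> (1 + s) powr \<bar>e\<bar>" using s by (intro ge_one_powr_ge_zero) auto
    then show ?thesis using mult_right_mono[OF \<open>1 \<le> (1 + s) powr \<bar>e\<bar>\<close>, of "x powr e"] by simp
  qed
  finally show ?thesis .
qed

lemma param_facts:
  fixes n :: nat and \<alpha> \<beta> :: real
  assumes "n \<ge> 3" and "\<beta> \<ge> 0" and "0 < \<alpha> + \<beta>" and "\<alpha> + \<beta> < real n - \<beta>"
    and "(real n - \<alpha> - 2 * \<beta>) / (2 * real n) + (real n - \<alpha>) / (2 * (real n - 1)) < 1"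
  shows "real n - \<alpha> - 2 * \<beta> > 0" "qexp n \<alpha> \<beta> > 2" "qexp n \<alpha> \<beta> * (\<alpha> + \<beta> - 1) > -1"
    "\<alpha> > 2 - real n" "\<alpha> < real n"
proof -
  define N where "N = real n"
  have N3: "N \<ge> 3" unfolding N_def using assms(1) by simp
  have D: "N - \<alpha> - 2 * \<beta> > 0" unfolding N_def using assms(4) by simp
  then show "real n - \<alpha> - 2 * \<beta> > 0" unfolding N_def .
  have h5: "(N - \<alpha> - 2 * \<beta>) / (2 * N) + (N - \<alpha>) / (2 * (N - 1)) < 1" unfolding N_def using assms(5) by simp
  have h5': "(N - 1) * (N - \<alpha> - 2 * \<beta>) + N * (N - \<alpha>) < 2 * N * (N - 1)"
  proof -
    have p1: "2 * N > 0" "2 * (N - 1) > 0" using N3 by auto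
    from h5 have "((N - \<alpha> - 2 * \<beta>) / (2 * N) + (N - \<alpha>) / (2 * (N - 1))) * (2 * N * (N - 1)) < 1 * (2 * N * (N - 1))"
      by (intro mult_strict_right_mono) (use N3 in auto)
    also have "((N - \<alpha> - 2 * \<beta>) / (2 * N) + (N - \<alpha>) / (2 * (N - 1))) * (2 * N * (N - 1)) =
        (N - 1) * (N - \<alpha> - 2 * \<beta>) + N * (N - \<alpha>)"
      using p1 by (simp add: field_simps)
    finally show ?thesis by simp
  qed
  have key: "(2 * N - 1) * \<alpha> + 2 * (N - 1) * \<beta> > N"
    using h5' by (simp add: algebra_simps)
  have q: "qexp n \<alpha> \<beta> = 2 * N / (N - \<alpha> - 2 * \<beta>)" unfolding qexp_def N_def by simp
  have "\<alpha> + 2 * \<beta> > 0" using assms(2,3) by simp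
  then have "2 * N > 2 * (N - \<alpha> - 2 * \<beta>)" by simp
  then show "qexp n \<alpha> \<beta> > 2" unfolding q using D by (simp add: divide_simps)
  have "2 * N * (\<alpha> + \<beta> - 1) > - (N - \<alpha> - 2 * \<beta>)" using key by (simp add: algebra_simps)
  then show "qexp n \<alpha> \<beta> * (\<alpha> + \<beta> - 1) > -1" unfolding q using D by (simp add: divide_simps)
  have "(N - \<alpha>) / (2 * (N - 1)) < 1"
  proof -
    have "(N - \<alpha> - 2 * \<beta>) / (2 * N) > 0" using D N3 by simp
    then show ?thesis using h5 by linarith
  qed
  then have "N - \<alpha> < 2 * (N - 1)" using N3 by (simp add: divide_simps)
  then show "\<alpha> > 2 - real n" unfolding N_def by simp
  show "\<alpha> < real n" using assms(2,4) by simp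
qed

lemma d_ab_eq:
  fixes t :: real
  assumes "t \<ge> 0"
  shows "d_ab n \<alpha> \<beta> (sqrt t) = (pi powr (real n / 2) * 2 powr (1 - \<beta>) / Gamma (real n / 2)) * (1 - t) powr (\<alpha> + \<beta> - 1)
      * hypergeom (real n / 2 - 1 + \<alpha> / 2) (\<alpha> / 2) (real n / 2) t"
proof -
  have "(sqrt t)\<^sup>2 = t" using assms by simp
  moreover have h: "(real n + \<alpha>) / 2 - 1 = real n / 2 - 1 + \<alpha> / 2" by (simp add: field_simps)
  ultimately show ?thesis unfolding d_ab_def h by simp
qed

lemma IB:
  fixes D0 G Gb F Fb s t q e L :: real
  assumes D0: "D0 > 0" and G: "G > 0" "G \<le> Gb" and F: "\<bar>F\<bar> \<le> Fb" and q: "q > 2" and s: "s > 0"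
  shows "(D0 * s powr e * G) powr (q - 2) * s powr (2 * e) * t powr L * F ^ 2
          \<le> D0 powr (q - 2) * Gb powr (q - 2) * Fb ^ 2 * (t powr L * s powr (e * q))"
    and "0 \<le> (D0 * s powr e * G) powr (q - 2) * s powr (2 * e) * t powr L * F ^ 2"
proof -
  have e1: "(D0 * s powr e * G) powr (q - 2) = D0 powr (q - 2) * s powr (e * (q - 2)) * G powr (q - 2)"
    using D0 G s by (simp add: powr_mult powr_powr)
  have e2: "s powr (e * (q - 2)) * s powr (2 * e) = s powr (e * q)"
    by (simp add: powr_add[symmetric] algebra_simps)
  have g: "G powr (q - 2) \<le> Gb powr (q - 2)" using G q by (intro powr_mono2) auto
  have f: "F ^ 2 \<le> Fb ^ 2" using F by (metis abs_ge_zero power2_abs power_mono)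
  have "(D0 * s powr e * G) powr (q - 2) * s powr (2 * e) * t powr L * F ^ 2
      = D0 powr (q - 2) * G powr (q - 2) * F ^ 2 * (t powr L * s powr (e * q))"
    unfolding e1 e2[symmetric] by (simp add: mult_ac)
  also have "\<dots> \<le> D0 powr (q - 2) * Gb powr (q - 2) * Fb ^ 2 * (t powr L * s powr (e * q))"
  proof (rule mult_right_mono)
    have "D0 powr (q - 2) * G powr (q - 2) \<le> D0 powr (q - 2) * Gb powr (q - 2)" by (rule mult_left_mono[OF g]) simp
    then show "D0 powr (q - 2) * G powr (q - 2) * F\<^sup>2 \<le> D0 powr (q - 2) * Gb powr (q - 2) * Fb\<^sup>2"
      by (rule mult_mono[OF _ f]) auto
  qed simp
  finally show "(D0 * s powr e * G) powr (q - 2) * s powr (2 * e) * t powr L * F ^ 2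
          \<le> D0 powr (q - 2) * Gb powr (q - 2) * Fb ^ 2 * (t powr L * s powr (e * q))" .
  show "0 \<le> (D0 * s powr e * G) powr (q - 2) * s powr (2 * e) * t powr L * F ^ 2" by simp
qed

lemma R_bound:
  fixes n :: nat and \<alpha> :: real
  assumes "\<alpha> < real n" and "n \<ge> 1"
  shows "\<exists>K>0. \<forall>l::nat. Gamma (real l + (real n - \<alpha>) / 2) ^ 2 / Gamma (real l + real n / 2) ^ 2
      \<le> K * (real l + (real n - \<alpha>) / 2) powr (- \<alpha>)"
proof -
  define z0 where "z0 = (real n - \<alpha>) / 2"
  have z0: "z0 > 0" unfolding z0_def using assms by simp
  have "z0 + \<alpha> / 2 > 0" unfolding z0_def using assms by (simp add: field_simps)
  from Gamma_ratio_bounds[OF z0 this] obtain K where K: "K > 0" and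
    KB: "\<forall>z\<ge>z0. Gamma (z + \<alpha> / 2) / Gamma z \<le> K * z powr (\<alpha> / 2) \<and> z powr (\<alpha> / 2) \<le> K * (Gamma (z + \<alpha> / 2) / Gamma z)"
    by (elim exE conjE) (rule that)
  show ?thesis
  proof (intro exI[of _ "K ^ 2"] conjI allI)
    show "K ^ 2 > 0" using K by simp
    fix l :: nat
    define z where "z = real l + z0"
    have z: "z \<ge> z0" "z > 0" unfolding z_def using z0 by auto
    have zc: "z + \<alpha> / 2 = real l + real n / 2" unfolding z_def z0_def by (simp add: field_simps)
    have "real l + real n / 2 > 0" using assms(2) by simp
    then have g: "Gamma z > 0" "Gamma (z + \<alpha> / 2) > 0" using z zc by auto
    have A: "z powr (\<alpha> / 2) \<le> K * (Gamma (z + \<alpha> / 2) / Gamma z)" using KB z by blast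
    have B: "Gamma z / Gamma (z + \<alpha> / 2) \<le> K * z powr (- (\<alpha> / 2))"
    proof -
      have X: "Gamma z / Gamma (z + \<alpha> / 2) * z powr (\<alpha> / 2) \<le> K"
        using A g by (simp add: divide_simps mult.commute)
      have one: "z powr (\<alpha> / 2) * z powr (- (\<alpha> / 2)) = 1" using z by (simp add: powr_add[symmetric])
      have "Gamma z / Gamma (z + \<alpha> / 2) = (Gamma z / Gamma (z + \<alpha> / 2) * z powr (\<alpha> / 2)) * z powr (- (\<alpha> / 2))"
        by (simp only: mult.assoc one mult_1_right)
      also have "\<dots> \<le> K * z powr (- (\<alpha> / 2))" by (rule mult_right_mono[OF X]) simp
      finally show ?thesis .
    qed
    have "(Gamma z / Gamma (z + \<alpha> / 2)) ^ 2 \<le> (K * z powr (- (\<alpha> / 2))) ^ 2"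
      by (rule power_mono[OF B]) (use g in simp)
    also have "\<dots> = K ^ 2 * z powr (- \<alpha>)" using z by (simp add: power_mult_distrib powr_realpow[symmetric] powr_powr)
    finally show "Gamma (real l + (real n - \<alpha>) / 2) ^ 2 / Gamma (real l + real n / 2) ^ 2
      \<le> K ^ 2 * (real l + (real n - \<alpha>) / 2) powr (- \<alpha>)"
      using zc unfolding z_def z0_def by (simp add: power_divide)
  qed
qed

definition integrand :: "nat \<Rightarrow> real \<Rightarrow> real \<Rightarrow> nat \<Rightarrow> real \<Rightarrow> real" where
  "integrand n \<alpha> \<beta> l t =
         d_ab n \<alpha> \<beta> (sqrt t) powr (qexp n \<alpha> \<beta> - 2)
         * (1 - t) powr (2 * (\<beta> + \<alpha> - 1))
         * t powr (real n / 2 + real l - 1)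
         * (hypergeom (real l + (real n + \<alpha>) / 2 - 1) (\<alpha> / 2) (real l + real n / 2) t) ^ 2"

lemma A_coeff_alt: "A_coeff n \<alpha> \<beta> l = Gamma (real l + (real n - \<alpha>) / 2) ^ 2 / Gamma (real l + real n / 2) ^ 2
     * integral {0..1} (integrand n \<alpha> \<beta> l)"
  unfolding A_coeff_def integrand_def ..

lemma A_generic:
  fixes n l :: nat and \<alpha> \<beta> KR M1 M2 p1 p2 :: real
  assumes n: "n \<ge> 1"
    and KR: "Gamma (real l + (real n - \<alpha>) / 2) ^ 2 / Gamma (real l + real n / 2) ^ 2 \<le> KR * (real l + (real n - \<alpha>) / 2) powr (- \<alpha>)"
    and p1: "p1 > -1" and p2: "p2 > -1" and M1: "M1 \<ge> 0" and M2: "M2 \<ge> 0"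
    and bound: "\<And>t. 0 < t \<Longrightarrow> t < 1 \<Longrightarrow> \<bar>integrand n \<alpha> \<beta> l t\<bar> \<le>
        M1 * (t powr (real n / 2 + real l - 1) * (1 - t) powr p1) + M2 * (t powr (real n / 2 + real l - 1) * (1 - t) powr p2)"
  shows "\<bar>A_coeff n \<alpha> \<beta> l\<bar> \<le> KR * (real l + (real n - \<alpha>) / 2) powr (- \<alpha>) *
     (M1 * Beta (real l + real n / 2) (p1 + 1) + M2 * Beta (real l + real n / 2) (p2 + 1))"
proof -
  define L where "L = real n / 2 + real l - 1"
  have L: "L > -1" unfolding L_def using n by simp
  have L1: "L + 1 = real l + real n / 2" unfolding L_def by simp
  have bd: "\<bar>integrand n \<alpha> \<beta> l t\<bar> \<le> M1 * (t powr L * (1 - t) powr p1) + M2 * (t powr L * (1 - t) powr p2)"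
    if tI: "t \<in> {0..1}" for t
  proof -
    have tt: "t = 0 \<or> t = 1 \<or> (0 < t \<and> t < 1)" using tI by auto
    consider "t = 0" | "t = 1" | "0 < t \<and> t < 1" using tt by blast
    then show ?thesis
    proof cases
      case 1 then show ?thesis unfolding integrand_def L_def by simp
    next
      case 2 then show ?thesis unfolding integrand_def L_def by simp
    next
      case 3 then show ?thesis using bound[of t] unfolding L_def by auto
    qed
  qed
  have I: "\<bar>integral {0..1} (integrand n \<alpha> \<beta> l)\<bar> \<le> M1 * Beta (L + 1) (p1 + 1) + M2 * Beta (L + 1) (p2 + 1)"
    by (rule GA[OF L p1 p2 M1 M2 bd])
  have R0: "0 \<le> Gamma (real l + (real n - \<alpha>) / 2) ^ 2 / Gamma (real l + real n / 2) ^ 2" by simp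
  have "\<bar>A_coeff n \<alpha> \<beta> l\<bar> = Gamma (real l + (real n - \<alpha>) / 2) ^ 2 / Gamma (real l + real n / 2) ^ 2
       * \<bar>integral {0..1} (integrand n \<alpha> \<beta> l)\<bar>"
    unfolding A_coeff_alt using R0 by (simp add: abs_mult)
  also have "\<dots> \<le> KR * (real l + (real n - \<alpha>) / 2) powr (- \<alpha>) * (M1 * Beta (L + 1) (p1 + 1) + M2 * Beta (L + 1) (p2 + 1))"
    by (rule mult_mono[OF KR I order_trans[OF R0 KR]]) simp
  finally show ?thesis unfolding L1 .
qed

lemma bigO_from_bound:
  fixes A :: "nat \<Rightarrow> real" and e C :: real
  assumes "\<And>l. l \<ge> 1 \<Longrightarrow> \<bar>A l\<bar> \<le> C * real l powr e"
  shows "A \<in> O(\<lambda>l. real l powr e)"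
proof (rule bigoI[of _ C])
  show "\<forall>\<^sub>F l in sequentially. norm (A l) \<le> C * norm (real l powr e)"
    using eventually_ge_at_top[of "1::nat"] by eventually_elim (use assms in auto)
qed


lemma finish:
  fixes l :: nat and A KR z c sz sc al m1 m2 e1 e2 p1 p2 B1 B2 KB1 KB2 E :: real
  assumes l: "l \<ge> 1" and z: "z = real l + sz" and sz: "sz \<ge> 0" and c: "c = real l + sc" and sc: "sc \<ge> 0"
    and KR: "KR \<ge> 0" and m1: "m1 \<ge> 0" and m2: "m2 \<ge> 0" and KB1: "KB1 \<ge> 0" and KB2: "KB2 \<ge> 0"
    and A: "\<bar>A\<bar> \<le> KR * z powr (- al) * (m1 * c powr e1 * B1 + m2 * c powr e2 * B2)"
    and B1: "B1 \<le> KB1 * c powr (- (p1 + 1))" and B2: "B2 \<le> KB2 * c powr (- (p2 + 1))"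
    and E1: "e1 - p1 - 1 - al \<le> E" and E2: "e2 - p2 - 1 - al \<le> E"
  shows "\<bar>A\<bar> \<le> KR * (1 + sz) powr \<bar>al\<bar> * (m1 * KB1 * (1 + sc) powr \<bar>e1 - p1 - 1\<bar> + m2 * KB2 * (1 + sc) powr \<bar>e2 - p2 - 1\<bar>) * real l powr E"
proof -
  have lr: "real l \<ge> 1" using l by simp
  have cp: "c > 0" using c sc lr by simp
  have zp: "z > 0" using z sz lr by simp
  have cB: "m * c powr e * B \<le> m * KB * (1 + sc) powr \<bar>e - p - 1\<bar> * real l powr (e - p - 1)"
    if m: "m \<ge> 0" and KB: "KB \<ge> 0" and B: "B \<le> KB * c powr (- (p + 1))" for m e B KB p :: real
  proof -
    have "m * c powr e * B \<le> m * c powr e * (KB * c powr (- (p + 1)))"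
      by (rule mult_left_mono[OF B]) (use m in simp)
    also have "\<dots> = m * KB * (c powr e * c powr (- (p + 1)))" by (simp add: mult_ac)
    also have "c powr e * c powr (- (p + 1)) = c powr (e - p - 1)"
    proof -
      have "e - p - 1 = e + (- (p + 1))" by simp
      then show ?thesis by (simp only: powr_add)
    qed
    finally have X: "m * c powr e * B \<le> m * KB * c powr (e - p - 1)" .
    also have "c powr (e - p - 1) \<le> (1 + sc) powr \<bar>e - p - 1\<bar> * real l powr (e - p - 1)"
      unfolding c by (rule shift_powr[OF sc lr])
    then have "m * KB * c powr (e - p - 1) \<le> m * KB * ((1 + sc) powr \<bar>e - p - 1\<bar> * real l powr (e - p - 1))"
      by (rule mult_left_mono) (use m KB in simp)
    with X show ?thesis by (simp add: mult_ac)
  qed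
  have zB: "z powr (- al) \<le> (1 + sz) powr \<bar>al\<bar> * real l powr (- al)"
    unfolding z using shift_powr[OF sz lr, of "- al"] by simp
  have lE: "real l powr (- al) * real l powr (e - p - 1) \<le> real l powr E" if "e - p - 1 - al \<le> E" for e p
  proof -
    have "real l powr (- al) * real l powr (e - p - 1) = real l powr (e - p - 1 - al)"
      by (simp add: powr_add[symmetric])
    also have "\<dots> \<le> real l powr E" using lr that by (intro powr_mono) auto
    finally show ?thesis .
  qed
  define Q1 where "Q1 = m1 * KB1 * (1 + sc) powr \<bar>e1 - p1 - 1\<bar>"
  define Q2 where "Q2 = m2 * KB2 * (1 + sc) powr \<bar>e2 - p2 - 1\<bar>"
  have Q: "Q1 \<ge> 0" "Q2 \<ge> 0" unfolding Q1_def Q2_def using m1 m2 KB1 KB2 by auto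
  have S: "m1 * c powr e1 * B1 + m2 * c powr e2 * B2 \<le> Q1 * real l powr (e1 - p1 - 1) + Q2 * real l powr (e2 - p2 - 1)"
    unfolding Q1_def Q2_def by (intro add_mono cB m1 m2 KB1 KB2 B1 B2)
  have Zp: "0 \<le> KR * z powr (- al)" using KR by simp
  have "\<bar>A\<bar> \<le> KR * z powr (- al) * (Q1 * real l powr (e1 - p1 - 1) + Q2 * real l powr (e2 - p2 - 1))"
    using A mult_left_mono[OF S Zp] by linarith
  also have "\<dots> \<le> KR * ((1 + sz) powr \<bar>al\<bar> * real l powr (- al)) * (Q1 * real l powr (e1 - p1 - 1) + Q2 * real l powr (e2 - p2 - 1))"
    by (intro mult_right_mono mult_left_mono zB KR) (use Q in simp)
  also have "\<dots> = KR * (1 + sz) powr \<bar>al\<bar> * (Q1 * (real l powr (- al) * real l powr (e1 - p1 - 1)) + Q2 * (real l powr (- al) * real l powr (e2 - p2 - 1)))"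
    by (simp add: algebra_simps)
  also have "\<dots> \<le> KR * (1 + sz) powr \<bar>al\<bar> * (Q1 * real l powr E + Q2 * real l powr E)"
    by (intro mult_left_mono add_mono lE E1 E2 Q) (use KR in simp)
  also have "\<dots> = KR * (1 + sz) powr \<bar>al\<bar> * (Q1 + Q2) * real l powr E" by (simp add: algebra_simps)
  finally show ?thesis unfolding Q1_def Q2_def .
qed

lemma sq_sum_le: "((x::real) + y)\<^sup>2 \<le> 2 * (x\<^sup>2 + y\<^sup>2)"
proof -
  have "0 \<le> (x - y)\<^sup>2" by simp
  then show ?thesis by (simp add: power2_eq_square algebra_simps)
qed

definition Dz :: "nat \<Rightarrow> real \<Rightarrow> real" where
  "Dz n \<beta> = pi powr (real n / 2) * 2 powr (1 - \<beta>) / Gamma (real n / 2)"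

lemma Dz_pos: "n \<ge> 1 \<Longrightarrow> Dz n \<beta> > 0"
  unfolding Dz_def by (intro divide_pos_pos mult_pos_pos) auto

lemma PW:
  fixes n l :: nat and \<alpha> \<beta> t Gb Fb :: real
  assumes n: "n \<ge> 1" and t0: "0 < t" and t1: "t < 1" and q: "qexp n \<alpha> \<beta> > 2"
    and G: "0 < hypergeom (real n / 2 - 1 + \<alpha> / 2) (\<alpha> / 2) (real n / 2) t"
           "hypergeom (real n / 2 - 1 + \<alpha> / 2) (\<alpha> / 2) (real n / 2) t \<le> Gb"
    and F: "\<bar>hypergeom ((real l + real n / 2) - 1 + \<alpha> / 2) (\<alpha> / 2) (real l + real n / 2) t\<bar> \<le> Fb"
  shows "\<bar>integrand n \<alpha> \<beta> l t\<bar> \<le> Dz n \<beta> powr (qexp n \<alpha> \<beta> - 2) * Gb powr (qexp n \<alpha> \<beta> - 2) * Fb ^ 2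
            * (t powr (real n / 2 + real l - 1) * (1 - t) powr (qexp n \<alpha> \<beta> * (\<alpha> + \<beta> - 1)))"
proof -
  have e1: "real l + (real n + \<alpha>) / 2 - 1 = (real l + real n / 2) - 1 + \<alpha> / 2" by (simp add: field_simps)
  have e2: "2 * (\<beta> + \<alpha> - 1) = 2 * (\<alpha> + \<beta> - 1)" by simp
  have form: "integrand n \<alpha> \<beta> l t = (Dz n \<beta> * (1 - t) powr (\<alpha> + \<beta> - 1) * hypergeom (real n / 2 - 1 + \<alpha> / 2) (\<alpha> / 2) (real n / 2) t) powr (qexp n \<alpha> \<beta> - 2)
      * (1 - t) powr (2 * (\<alpha> + \<beta> - 1)) * t powr (real n / 2 + real l - 1)
      * (hypergeom ((real l + real n / 2) - 1 + \<alpha> / 2) (\<alpha> / 2) (real l + real n / 2) t) ^ 2"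
    unfolding integrand_def d_ab_eq[OF less_imp_le[OF t0]] e1 e2 Dz_def ..
  have s: "1 - t > 0" using t1 by simp
  note I1 = IB(1)[where e="\<alpha> + \<beta> - 1" and t=t and L="real n / 2 + real l - 1", OF Dz_pos[OF n] G F q s]
  note I2 = IB(2)[where e="\<alpha> + \<beta> - 1" and t=t and L="real n / 2 + real l - 1", OF Dz_pos[OF n] G F q s]
  show ?thesis unfolding form using I1 I2 by (simp add: mult.commute del: powr_mult)
qed

lemma powr_sq: "(x::real) \<ge> 0 \<Longrightarrow> (x powr a) ^ 2 = x powr (2 * a)"
  by (simp add: power2_eq_square powr_add[symmetric])

lemma case_nonpos:
  fixes n :: nat and \<alpha> \<beta> :: real
  assumes h1: "n \<ge> 3" and h2: "\<beta> \<ge> 0" and h3: "0 < \<alpha> + \<beta>" and h4: "\<alpha> + \<beta> < real n - \<beta>"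
    and h5: "(real n - \<alpha> - 2 * \<beta>) / (2 * real n) + (real n - \<alpha>) / (2 * (real n - 1)) < 1"
    and al: "\<alpha> \<le> 0"
  shows "(\<lambda>l. A_coeff n \<alpha> \<beta> l) \<in> O(\<lambda>l. real l powr (- (1 + qexp n \<alpha> \<beta> * (\<alpha> + \<beta> - 1))))"
proof -
  note pf = param_facts[OF h1 h2 h3 h4 h5]
  define q where "q = qexp n \<alpha> \<beta>"
  define g where "g = q * (\<alpha> + \<beta> - 1)"
  have q2: "q > 2" unfolding q_def using pf by simp
  have g1: "g > -1" unfolding g_def q_def using pf by simp
  define b where "b = \<alpha> / 2"
  define c0 where "c0 = real n / 2"
  have n1: "n \<ge> 1" using h1 by simp
  have c0p: "c0 > 0" unfolding c0_def using h1 by simp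
  have a0: "c0 - 1 + b > 0" unfolding c0_def b_def using pf(4) by simp
  have b0: "b \<le> 0" unfolding b_def using al by simp
  obtain K3 where K3: "K3 > 0" and K3B: "\<forall>c t. c \<ge> c0 \<longrightarrow> 0 \<le> t \<longrightarrow> t < 1 \<longrightarrow>
     (1 - t) powr (- b) \<le> hypergeom (c - 1 + b) b c t \<and> hypergeom (c - 1 + b) b c t \<le> 1 \<and>
     hypergeom (c - 1 + b) b c t \<le> K3 * ((1 - t) powr (- b) + c powr b)"
    using FB3[OF c0p b0 a0] by (elim exE conjE) (rule that)
  obtain KR where KR: "KR > 0" and KRB: "\<forall>l::nat. Gamma (real l + (real n - \<alpha>) / 2) ^ 2 / Gamma (real l + real n / 2) ^ 2
      \<le> KR * (real l + (real n - \<alpha>) / 2) powr (- \<alpha>)"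
    using R_bound[OF pf(5) n1] by (elim exE conjE) (rule that)
  have p1: "g - \<alpha> > -1" using g1 al by simp
  obtain KB1 where KB1: "KB1 > 0" and KB1B: "\<forall>x\<ge>c0. Beta x (g - \<alpha> + 1) \<le> KB1 * x powr (- (g - \<alpha> + 1))"
    using BB[OF p1 c0p] by (elim exE conjE) (rule that)
  obtain KB2 where KB2: "KB2 > 0" and KB2B: "\<forall>x\<ge>c0. Beta x (g + 1) \<le> KB2 * x powr (- (g + 1))"
    using BB[OF g1 c0p] by (elim exE conjE) (rule that)
  define m where "m = 2 * Dz n \<beta> powr (q - 2) * K3 ^ 2"
  have m0: "m \<ge> 0" unfolding m_def by simp
  define C where "C = KR * (1 + (real n - \<alpha>) / 2) powr \<bar>\<alpha>\<bar> * (m * KB1 * (1 + real n / 2) powr \<bar>0 - (g - \<alpha>) - 1\<bar> + m * KB2 * (1 + real n / 2) powr \<bar>\<alpha> - g - 1\<bar>)"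
  show ?thesis
  proof (rule bigO_from_bound[of _ C])
    fix l :: nat assume l: "l \<ge> 1"
    define c where "c = real l + real n / 2"
    have cc0: "c \<ge> c0" unfolding c_def c0_def by simp
    have cp: "c > 0" using cc0 c0p by simp
    have pw: "\<bar>integrand n \<alpha> \<beta> l t\<bar> \<le> m * (t powr (real n / 2 + real l - 1) * (1 - t) powr (g - \<alpha>))
        + m * c powr \<alpha> * (t powr (real n / 2 + real l - 1) * (1 - t) powr g)" if t0: "0 < t" and t1: "t < 1" for t
    proof -
      define s where "s = 1 - t"
      have sp: "s > 0" unfolding s_def using t1 by simp
      have Gb: "(1 - t) powr (- b) \<le> hypergeom (c0 - 1 + b) b c0 t" "hypergeom (c0 - 1 + b) b c0 t \<le> 1"
        using K3B cc0 t0 t1 by auto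
      have Gp: "0 < hypergeom (c0 - 1 + b) b c0 t" using Gb(1) t1 by (smt (verit) powr_gt_zero)
      have Fb: "(1 - t) powr (- b) \<le> hypergeom (c - 1 + b) b c t" "hypergeom (c - 1 + b) b c t \<le> K3 * ((1 - t) powr (- b) + c powr b)"
        using K3B cc0 t0 t1 by auto
      have Fabs: "\<bar>hypergeom (c - 1 + b) b c t\<bar> \<le> K3 * ((1 - t) powr (- b) + c powr b)"
        using Fb by (smt (verit) powr_ge_zero)
      have P: "\<bar>integrand n \<alpha> \<beta> l t\<bar> \<le> Dz n \<beta> powr (q - 2) * 1 powr (q - 2) * (K3 * ((1 - t) powr (- b) + c powr b)) ^ 2
            * (t powr (real n / 2 + real l - 1) * (1 - t) powr g)"
        unfolding q_def g_def
        by (rule PW[OF n1 t0 t1 pf(2)]) (use Gp Gb(2) Fabs in \<open>simp_all add: c0_def b_def c_def\<close>)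
      have sq: "(K3 * ((1 - t) powr (- b) + c powr b)) ^ 2 \<le> 2 * K3 ^ 2 * ((1 - t) powr (- \<alpha>) + c powr \<alpha>)"
      proof -
        have "(K3 * ((1 - t) powr (- b) + c powr b)) ^ 2 = K3 ^ 2 * ((1 - t) powr (- b) + c powr b) ^ 2"
          by (simp add: power_mult_distrib)
        also have "\<dots> \<le> K3 ^ 2 * (2 * (((1 - t) powr (- b)) ^ 2 + (c powr b) ^ 2))"
          by (intro mult_left_mono sq_sum_le) simp
        also have "((1 - t) powr (- b)) ^ 2 = (1 - t) powr (- \<alpha>)" using t1 by (simp add: powr_sq b_def)
        also have "(c powr b) ^ 2 = c powr \<alpha>" using cp by (simp add: powr_sq b_def)
        finally show ?thesis by (simp add: algebra_simps)
      qed
      have "\<bar>integrand n \<alpha> \<beta> l t\<bar> \<le> Dz n \<beta> powr (q - 2) * (2 * K3 ^ 2 * ((1 - t) powr (- \<alpha>) + c powr \<alpha>))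
            * (t powr (real n / 2 + real l - 1) * (1 - t) powr g)"
        using P mult_right_mono[OF mult_left_mono[OF sq, of "Dz n \<beta> powr (q - 2)"], of "t powr (real n / 2 + real l - 1) * (1 - t) powr g"]
        by simp
      also have "\<dots> = m * (t powr (real n / 2 + real l - 1) * ((1 - t) powr (- \<alpha>) * (1 - t) powr g))
        + m * c powr \<alpha> * (t powr (real n / 2 + real l - 1) * (1 - t) powr g)"
        unfolding m_def by (simp add: algebra_simps)
      also have "(1 - t) powr (- \<alpha>) * (1 - t) powr g = (1 - t) powr (g - \<alpha>)"
        by (simp add: powr_add[symmetric])
      finally show ?thesis .
    qed
    have Ab: "\<bar>A_coeff n \<alpha> \<beta> l\<bar> \<le> KR * (real l + (real n - \<alpha>) / 2) powr (- \<alpha>) *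
       (m * Beta (real l + real n / 2) (g - \<alpha> + 1) + m * c powr \<alpha> * Beta (real l + real n / 2) (g + 1))"
      by (rule A_generic[OF n1 KRB[rule_format] p1 g1 m0 _ pw]) (use m0 cp in simp)
    have Ab': "\<bar>A_coeff n \<alpha> \<beta> l\<bar> \<le> KR * (real l + (real n - \<alpha>) / 2) powr (- \<alpha>) *
       (m * c powr 0 * Beta c (g - \<alpha> + 1) + m * c powr \<alpha> * Beta c (g + 1))"
      using Ab cp unfolding c_def by simp
    show "\<bar>A_coeff n \<alpha> \<beta> l\<bar> \<le> C * real l powr (- (1 + qexp n \<alpha> \<beta> * (\<alpha> + \<beta> - 1)))"
      unfolding C_def
      by (rule finish[OF l refl _ c_def _ _ m0 m0 _ _ Ab' KB1B[rule_format, OF cc0] KB2B[rule_format, OF cc0]])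
         (use h1 pf(5) KR KB1 KB2 in \<open>simp_all add: g_def q_def\<close>)
  qed
qed

lemma case_small:
  fixes n :: nat and \<alpha> \<beta> :: real
  assumes h1: "n \<ge> 3" and h2: "\<beta> \<ge> 0" and h3: "0 < \<alpha> + \<beta>" and h4: "\<alpha> + \<beta> < real n - \<beta>"
    and h5: "(real n - \<alpha> - 2 * \<beta>) / (2 * real n) + (real n - \<alpha>) / (2 * (real n - 1)) < 1"
    and al0: "0 < \<alpha>" and al1: "\<alpha> < 1"
  shows "(\<lambda>l. A_coeff n \<alpha> \<beta> l) \<in> O(\<lambda>l. real l powr (- (1 + qexp n \<alpha> \<beta> * (\<alpha> + \<beta> - 1))))"
proof -
  note pf = param_facts[OF h1 h2 h3 h4 h5]
  define q where "q = qexp n \<alpha> \<beta>"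
  define g where "g = q * (\<alpha> + \<beta> - 1)"
  have q2: "q > 2" unfolding q_def using pf by simp
  have g1: "g > -1" unfolding g_def q_def using pf by simp
  define b where "b = \<alpha> / 2"
  define c0 where "c0 = real n / 2"
  have n1: "n \<ge> 1" using h1 by simp
  have c01: "c0 \<ge> 1" unfolding c0_def using h1 by simp
  have c0p: "c0 > 0" using c01 by simp
  have bp: "b > 0" unfolding b_def using al0 by simp
  have b2: "2 * b < 1" unfolding b_def using al1 by simp
  define th where "th = max 0 (b - (g + 1) / 4)"
  have th0: "0 \<le> th" unfolding th_def by simp
  have thb: "th < b" unfolding th_def using bp g1 by simp
  have th1: "th \<le> 1 - b" using thb b2 by simp
  have thl: "2 * th \<ge> \<alpha> - (g + 1) / 2"
  proof -
    have "th \<ge> b - (g + 1) / 4" unfolding th_def by simp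
    then show ?thesis unfolding b_def by simp
  qed
  obtain K1 where K1: "K1 > 0" and K1B: "\<forall>c t. c \<ge> c0 \<longrightarrow> 0 \<le> t \<longrightarrow> t < 1 \<longrightarrow>
     1 \<le> hypergeom (c - 1 + b) b c t \<and> hypergeom (c - 1 + b) b c t \<le> K1 * c powr th * (1 - t) powr (th - b)"
    using FB1[OF c01 bp thb th0 th1] by (elim exE conjE) (rule that)
  obtain K2 where K2: "K2 > 0" and K2B: "\<forall>t. 0 \<le> t \<longrightarrow> t < 1 \<longrightarrow> 1 \<le> hypergeom (c0 - 1 + b) b c0 t \<and> hypergeom (c0 - 1 + b) b c0 t \<le> K2"
    using HBbdd[OF c01 bp b2] by (elim exE conjE) (rule that)
  obtain KR where KR: "KR > 0" and KRB: "\<forall>l::nat. Gamma (real l + (real n - \<alpha>) / 2) ^ 2 / Gamma (real l + real n / 2) ^ 2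
      \<le> KR * (real l + (real n - \<alpha>) / 2) powr (- \<alpha>)"
    using R_bound[OF pf(5) n1] by (elim exE conjE) (rule that)
  define p where "p = g + 2 * th - \<alpha>"
  have p1: "p > -1" unfolding p_def using thl g1 by (simp add: field_simps)
  obtain KB1 where KB1: "KB1 > 0" and KB1B: "\<forall>x\<ge>c0. Beta x (p + 1) \<le> KB1 * x powr (- (p + 1))"
    using BB[OF p1 c0p] by (elim exE conjE) (rule that)
  obtain KB2 where KB2: "KB2 > 0" and KB2B: "\<forall>x\<ge>c0. Beta x (g + 1) \<le> KB2 * x powr (- (g + 1))"
    using BB[OF g1 c0p] by (elim exE conjE) (rule that)
  define m where "m = Dz n \<beta> powr (q - 2) * K2 powr (q - 2) * K1 ^ 2"
  have m0: "m \<ge> 0" unfolding m_def by simp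
  define C where "C = KR * (1 + (real n - \<alpha>) / 2) powr \<bar>\<alpha>\<bar> * (m * KB1 * (1 + real n / 2) powr \<bar>2 * th - p - 1\<bar> + 0 * KB2 * (1 + real n / 2) powr \<bar>0 - g - 1\<bar>)"
  show ?thesis
  proof (rule bigO_from_bound[of _ C])
    fix l :: nat assume l: "l \<ge> 1"
    define c where "c = real l + real n / 2"
    have cc0: "c \<ge> c0" unfolding c_def c0_def by simp
    have cp: "c > 0" using cc0 c0p by simp
    have pw: "\<bar>integrand n \<alpha> \<beta> l t\<bar> \<le> m * c powr (2 * th) * (t powr (real n / 2 + real l - 1) * (1 - t) powr p)
        + 0 * (t powr (real n / 2 + real l - 1) * (1 - t) powr g)" if t0: "0 < t" and t1: "t < 1" for t
    proof -
      have Gb: "1 \<le> hypergeom (c0 - 1 + b) b c0 t" "hypergeom (c0 - 1 + b) b c0 t \<le> K2"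
        using K2B t0 t1 by auto
      have Fb: "1 \<le> hypergeom (c - 1 + b) b c t" "hypergeom (c - 1 + b) b c t \<le> K1 * c powr th * (1 - t) powr (th - b)"
        using K1B cc0 t0 t1 by auto
      have Fabs: "\<bar>hypergeom (c - 1 + b) b c t\<bar> \<le> K1 * c powr th * (1 - t) powr (th - b)"
        using Fb by simp
      have P: "\<bar>integrand n \<alpha> \<beta> l t\<bar> \<le> Dz n \<beta> powr (q - 2) * K2 powr (q - 2) * (K1 * c powr th * (1 - t) powr (th - b)) ^ 2
            * (t powr (real n / 2 + real l - 1) * (1 - t) powr g)"
        unfolding q_def g_def
        by (rule PW[OF n1 t0 t1 pf(2)]) (use Gb Fabs in \<open>simp_all add: c0_def b_def c_def\<close>)
      have sq: "(K1 * c powr th * (1 - t) powr (th - b)) ^ 2 = K1 ^ 2 * c powr (2 * th) * (1 - t) powr (2 * th - \<alpha>)"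
      proof -
        have "(K1 * c powr th * (1 - t) powr (th - b)) ^ 2 = K1 ^ 2 * (c powr th) ^ 2 * ((1 - t) powr (th - b)) ^ 2"
          by (simp add: power_mult_distrib)
        also have "(c powr th) ^ 2 = c powr (2 * th)" using cp by (simp add: powr_sq)
        also have "((1 - t) powr (th - b)) ^ 2 = (1 - t) powr (2 * th - \<alpha>)" using t1 by (simp add: powr_sq b_def algebra_simps)
        finally show ?thesis .
      qed
      have pe: "(1 - t) powr (2 * th - \<alpha>) * (1 - t) powr g = (1 - t) powr p"
        unfolding p_def by (simp add: powr_add[symmetric] algebra_simps)
      have "Dz n \<beta> powr (q - 2) * K2 powr (q - 2) * (K1 ^ 2 * c powr (2 * th) * (1 - t) powr (2 * th - \<alpha>))
            * (t powr (real n / 2 + real l - 1) * (1 - t) powr g)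
          = m * c powr (2 * th) * (t powr (real n / 2 + real l - 1) * ((1 - t) powr (2 * th - \<alpha>) * (1 - t) powr g))"
        unfolding m_def by (simp only: mult_ac)
      then have E: "Dz n \<beta> powr (q - 2) * K2 powr (q - 2) * (K1 ^ 2 * c powr (2 * th) * (1 - t) powr (2 * th - \<alpha>))
            * (t powr (real n / 2 + real l - 1) * (1 - t) powr g)
          = m * c powr (2 * th) * (t powr (real n / 2 + real l - 1) * (1 - t) powr p)"
        by (simp only: pe)
      have P': "\<bar>integrand n \<alpha> \<beta> l t\<bar> \<le> Dz n \<beta> powr (q - 2) * K2 powr (q - 2) * (K1 ^ 2 * c powr (2 * th) * (1 - t) powr (2 * th - \<alpha>))
            * (t powr (real n / 2 + real l - 1) * (1 - t) powr g)"
        using P unfolding sq .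
      show ?thesis using P' E by linarith
    qed
    have Ab: "\<bar>A_coeff n \<alpha> \<beta> l\<bar> \<le> KR * (real l + (real n - \<alpha>) / 2) powr (- \<alpha>) *
       (m * c powr (2 * th) * Beta (real l + real n / 2) (p + 1) + 0 * Beta (real l + real n / 2) (g + 1))"
      by (rule A_generic[OF n1 KRB[rule_format] p1 g1 _ _ pw]) (use m0 cp in simp_all)
    have Ab': "\<bar>A_coeff n \<alpha> \<beta> l\<bar> \<le> KR * (real l + (real n - \<alpha>) / 2) powr (- \<alpha>) *
       (m * c powr (2 * th) * Beta c (p + 1) + 0 * c powr 0 * Beta c (g + 1))"
      using Ab cp unfolding c_def by simp
    show "\<bar>A_coeff n \<alpha> \<beta> l\<bar> \<le> C * real l powr (- (1 + qexp n \<alpha> \<beta> * (\<alpha> + \<beta> - 1)))"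
      unfolding C_def
      by (rule finish[OF l refl _ c_def _ _ m0 _ _ _ Ab' KB1B[rule_format, OF cc0] KB2B[rule_format, OF cc0]])
         (use h1 pf(5) KR KB1 KB2 al0 in \<open>simp_all add: g_def q_def p_def\<close>)
  qed
qed

lemma powr_cs: "K > 0 \<Longrightarrow> (s::real) > 0 \<Longrightarrow> (K * s powr a) powr r = K powr r * s powr (a * r)"
  by (simp add: powr_mult powr_powr)

lemma case_one:
  fixes n :: nat and \<alpha> \<beta> e0 :: real
  assumes h1: "n \<ge> 3" and h2: "\<beta> \<ge> 0" and h3: "0 < \<alpha> + \<beta>" and h4: "\<alpha> + \<beta> < real n - \<beta>"
    and h5: "(real n - \<alpha> - 2 * \<beta>) / (2 * real n) + (real n - \<alpha>) / (2 * (real n - 1)) < 1"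
    and al: "\<alpha> = 1" and e0: "e0 > 0"
  shows "(\<lambda>l. A_coeff n \<alpha> \<beta> l) \<in> O(\<lambda>l. real l powr (- 1 - qexp n \<alpha> \<beta> * \<beta> + e0))"
proof -
  note pf = param_facts[OF h1 h2 h3 h4 h5]
  define q where "q = qexp n \<alpha> \<beta>"
  define g where "g = q * (\<alpha> + \<beta> - 1)"
  have q2: "q > 2" unfolding q_def using pf by simp
  have g1: "g > -1" unfolding g_def q_def using pf by simp
  have gq: "g = q * \<beta>" unfolding g_def using al by simp
  have qb: "q * \<beta> \<ge> 0" using q2 h2 by simp
  define b where "b = \<alpha> / 2"
  have b: "b = 1 / 2" unfolding b_def al by simp
  define c0 where "c0 = real n / 2"
  have n1: "n \<ge> 1" using h1 by simp
  have c01: "c0 \<ge> 1" unfolding c0_def using h1 by simp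
  have c0p: "c0 > 0" using c01 by simp
  have bp: "b > 0" unfolding b by simp
  define ep where "ep = min (e0 / q) (1 / (2 * q))"
  have ep0: "ep > 0" unfolding ep_def using e0 q2 by simp
  have epq: "q * ep \<le> 1 / 2" "q * ep \<le> e0"
  proof -
    have "ep \<le> 1 / (2 * q)" "ep \<le> e0 / q" unfolding ep_def by auto
    then show "q * ep \<le> 1 / 2" "q * ep \<le> e0" using q2 by (auto simp: field_simps)
  qed
  have "2 * ep < q * ep" using q2 ep0 by (simp add: mult_strict_right_mono)
  then have ep4: "ep < 1 / 4" using epq(1) by linarith
  define th where "th = 1 / 2 - ep"
  have th0: "0 \<le> th" unfolding th_def using ep4 by simp
  have thb: "th < b" unfolding th_def b using ep0 by simp
  have th1: "th \<le> 1 - b" unfolding th_def b using ep0 by simp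
  have thmb: "th - b = - ep" unfolding th_def b by simp
  obtain K1 where K1: "K1 > 0" and K1B: "\<forall>c t. c \<ge> c0 \<longrightarrow> 0 \<le> t \<longrightarrow> t < 1 \<longrightarrow>
     1 \<le> hypergeom (c - 1 + b) b c t \<and> hypergeom (c - 1 + b) b c t \<le> K1 * c powr th * (1 - t) powr (th - b)"
    using FB1[OF c01 bp thb th0 th1] by (elim exE conjE) (rule that)
  obtain KR where KR: "KR > 0" and KRB: "\<forall>l::nat. Gamma (real l + (real n - \<alpha>) / 2) ^ 2 / Gamma (real l + real n / 2) ^ 2
      \<le> KR * (real l + (real n - \<alpha>) / 2) powr (- \<alpha>)"
    using R_bound[OF pf(5) n1] by (elim exE conjE) (rule that)
  define p where "p = q * \<beta> - q * ep"
  have p1: "p > -1" unfolding p_def using epq qb by simp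
  obtain KB1 where KB1: "KB1 > 0" and KB1B: "\<forall>x\<ge>c0. Beta x (p + 1) \<le> KB1 * x powr (- (p + 1))"
    using BB[OF p1 c0p] by (elim exE conjE) (rule that)
  obtain KB2 where KB2: "KB2 > 0" and KB2B: "\<forall>x\<ge>c0. Beta x (g + 1) \<le> KB2 * x powr (- (g + 1))"
    using BB[OF g1 c0p] by (elim exE conjE) (rule that)
  define KG where "KG = K1 * c0 powr th"
  have KG: "KG > 0" unfolding KG_def using K1 c0p by simp
  define m where "m = Dz n \<beta> powr (q - 2) * KG powr (q - 2) * K1 ^ 2"
  have m0: "m \<ge> 0" unfolding m_def by simp
  define C where "C = KR * (1 + (real n - \<alpha>) / 2) powr \<bar>\<alpha>\<bar> * (m * KB1 * (1 + real n / 2) powr \<bar>2 * th - p - 1\<bar> + 0 * KB2 * (1 + real n / 2) powr \<bar>0 - g - 1\<bar>)"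
  show ?thesis
  proof (rule bigO_from_bound[of _ C])
    fix l :: nat assume l: "l \<ge> 1"
    define c where "c = real l + real n / 2"
    have cc0: "c \<ge> c0" unfolding c_def c0_def by simp
    have cp: "c > 0" using cc0 c0p by simp
    have pw: "\<bar>integrand n \<alpha> \<beta> l t\<bar> \<le> m * c powr (2 * th) * (t powr (real n / 2 + real l - 1) * (1 - t) powr p)
        + 0 * (t powr (real n / 2 + real l - 1) * (1 - t) powr g)" if t0: "0 < t" and t1: "t < 1" for t
    proof -
      have sp: "1 - t > 0" using t1 by simp
      have Gb: "1 \<le> hypergeom (c0 - 1 + b) b c0 t" "hypergeom (c0 - 1 + b) b c0 t \<le> KG * (1 - t) powr (- ep)"
        using K1B t0 t1 unfolding KG_def thmb[symmetric] by auto
      have Fb: "1 \<le> hypergeom (c - 1 + b) b c t" "hypergeom (c - 1 + b) b c t \<le> K1 * c powr th * (1 - t) powr (- ep)"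
        using K1B cc0 t0 t1 unfolding thmb[symmetric] by auto
      have Fabs: "\<bar>hypergeom (c - 1 + b) b c t\<bar> \<le> K1 * c powr th * (1 - t) powr (- ep)"
        using Fb by simp
      have P: "\<bar>integrand n \<alpha> \<beta> l t\<bar> \<le> Dz n \<beta> powr (q - 2) * (KG * (1 - t) powr (- ep)) powr (q - 2) * (K1 * c powr th * (1 - t) powr (- ep)) ^ 2
            * (t powr (real n / 2 + real l - 1) * (1 - t) powr g)"
        unfolding q_def g_def
        by (rule PW[OF n1 t0 t1 pf(2)]) (use Gb Fabs in \<open>simp_all add: c0_def b_def c_def\<close>)
      have sq: "(K1 * c powr th * (1 - t) powr (- ep)) ^ 2 = K1 ^ 2 * c powr (2 * th) * (1 - t) powr (- 2 * ep)"
      proof -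
        have "(K1 * c powr th * (1 - t) powr (- ep)) ^ 2 = K1 ^ 2 * (c powr th) ^ 2 * ((1 - t) powr (- ep)) ^ 2"
          by (simp add: power_mult_distrib)
        also have "(c powr th) ^ 2 = c powr (2 * th)" using cp by (simp add: powr_sq)
        also have "((1 - t) powr (- ep)) ^ 2 = (1 - t) powr (- 2 * ep)" using t1 by (simp add: powr_sq)
        finally show ?thesis .
      qed
      have gp: "(KG * (1 - t) powr (- ep)) powr (q - 2) = KG powr (q - 2) * (1 - t) powr (- ep * (q - 2))"
        by (rule powr_cs[OF KG sp])
      have pe: "(1 - t) powr (- ep * (q - 2)) * (1 - t) powr (- 2 * ep) * (1 - t) powr g = (1 - t) powr p"
        unfolding p_def gq by (simp add: powr_add[symmetric] algebra_simps)
      have E: "Dz n \<beta> powr (q - 2) * (KG powr (q - 2) * (1 - t) powr (- ep * (q - 2))) * (K1 ^ 2 * c powr (2 * th) * (1 - t) powr (- 2 * ep))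
            * (t powr (real n / 2 + real l - 1) * (1 - t) powr g)
          = m * c powr (2 * th) * (t powr (real n / 2 + real l - 1) * ((1 - t) powr (- ep * (q - 2)) * (1 - t) powr (- 2 * ep) * (1 - t) powr g))"
        unfolding m_def by (simp only: mult_ac)
      have P': "\<bar>integrand n \<alpha> \<beta> l t\<bar> \<le> Dz n \<beta> powr (q - 2) * (KG powr (q - 2) * (1 - t) powr (- ep * (q - 2))) * (K1 ^ 2 * c powr (2 * th) * (1 - t) powr (- 2 * ep))
            * (t powr (real n / 2 + real l - 1) * (1 - t) powr g)"
        using P unfolding sq gp .
      show ?thesis using P' E unfolding pe by linarith
    qed
    have Ab: "\<bar>A_coeff n \<alpha> \<beta> l\<bar> \<le> KR * (real l + (real n - \<alpha>) / 2) powr (- \<alpha>) *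
       (m * c powr (2 * th) * Beta (real l + real n / 2) (p + 1) + 0 * Beta (real l + real n / 2) (g + 1))"
      by (rule A_generic[OF n1 KRB[rule_format] p1 g1 _ _ pw]) (use m0 cp in simp_all)
    have Ab': "\<bar>A_coeff n \<alpha> \<beta> l\<bar> \<le> KR * (real l + (real n - \<alpha>) / 2) powr (- \<alpha>) *
       (m * c powr (2 * th) * Beta c (p + 1) + 0 * c powr 0 * Beta c (g + 1))"
      using Ab cp unfolding c_def by simp
    have E1: "2 * th - p - 1 - \<alpha> \<le> - 1 - q * \<beta> + e0"
      unfolding th_def p_def al using epq q2 ep0 by (simp add: algebra_simps)
    have E2: "0 - g - 1 - \<alpha> \<le> - 1 - q * \<beta> + e0" unfolding gq al using e0 by simp
    show "\<bar>A_coeff n \<alpha> \<beta> l\<bar> \<le> C * real l powr (- 1 - qexp n \<alpha> \<beta> * \<beta> + e0)"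
      unfolding C_def q_def[symmetric]
      by (rule finish[OF l refl _ c_def _ _ m0 _ _ _ Ab' KB1B[rule_format, OF cc0] KB2B[rule_format, OF cc0] E1 E2])
         (use h1 pf(5) KR KB1 KB2 in \<open>simp_all\<close>)
  qed
qed

lemma GB_gt:
  fixes c0 b :: real
  assumes c0: "c0 \<ge> 1" and b: "b > 1/2"
  shows "\<exists>KG>0. \<forall>t. 0 \<le> t \<longrightarrow> t < 1 \<longrightarrow> 1 \<le> hypergeom (c0 - 1 + b) b c0 t \<and> hypergeom (c0 - 1 + b) b c0 t \<le> KG * (1 - t) powr (1 - 2 * b)"
proof (cases "b < 1")
  case True
  have bp: "b > 0" using b by simp
  have thb: "1 - b < b" using b by simp
  obtain K where K: "K > 0" and KB: "\<forall>c t. c \<ge> c0 \<longrightarrow> 0 \<le> t \<longrightarrow> t < 1 \<longrightarrow>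
     1 \<le> hypergeom (c - 1 + b) b c t \<and> hypergeom (c - 1 + b) b c t \<le> K * c powr (1 - b) * (1 - t) powr ((1 - b) - b)"
  proof -
    have th0: "0 \<le> 1 - b" using True by simp
    from FB1[OF c0 bp thb th0 order_refl] show ?thesis by (elim exE conjE) (rule that)
  qed
  show ?thesis
  proof (intro exI[of _ "K * c0 powr (1 - b)"] conjI allI impI)
    show "K * c0 powr (1 - b) > 0" using K c0 by simp
    fix t :: real assume t: "0 \<le> t" "t < 1"
    have "(1 - b) - b = 1 - 2 * b" by simp
    then show "1 \<le> hypergeom (c0 - 1 + b) b c0 t" "hypergeom (c0 - 1 + b) b c0 t \<le> K * c0 powr (1 - b) * (1 - t) powr (1 - 2 * b)"
      using KB t by auto
  qed
next
  case False
  obtain K where K: "K > 0" and KB: "\<forall>c t. c \<ge> c0 \<longrightarrow> 0 \<le> t \<longrightarrow> t < 1 \<longrightarrow>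
     1 \<le> hypergeom (c - 1 + b) b c t \<and>
     hypergeom (c - 1 + b) b c t \<le> K * ((1 - t) powr (- b) + c powr (1 - b) * (1 - t) powr (1 - 2 * b))"
    using FB2[OF c0 b] by (elim exE conjE) (rule that)
  show ?thesis
  proof (intro exI[of _ "K * (1 + c0 powr (1 - b))"] conjI allI impI)
    show "K * (1 + c0 powr (1 - b)) > 0" using K by (simp add: add_pos_nonneg)
    fix t :: real assume t: "0 \<le> t" "t < 1"
    show "1 \<le> hypergeom (c0 - 1 + b) b c0 t" using KB t by auto
    have h: "hypergeom (c0 - 1 + b) b c0 t \<le> K * ((1 - t) powr (- b) + c0 powr (1 - b) * (1 - t) powr (1 - 2 * b))"
      using KB t by auto
    have "(1 - t) powr (- b) \<le> (1 - t) powr (1 - 2 * b)" using False t by (intro powr_mono') auto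
    then have "(1 - t) powr (- b) + c0 powr (1 - b) * (1 - t) powr (1 - 2 * b) \<le> (1 + c0 powr (1 - b)) * (1 - t) powr (1 - 2 * b)"
      by (simp add: algebra_simps)
    then have "K * ((1 - t) powr (- b) + c0 powr (1 - b) * (1 - t) powr (1 - 2 * b)) \<le> K * ((1 + c0 powr (1 - b)) * (1 - t) powr (1 - 2 * b))"
      by (rule mult_left_mono) (use K in simp)
    then show "hypergeom (c0 - 1 + b) b c0 t \<le> K * (1 + c0 powr (1 - b)) * (1 - t) powr (1 - 2 * b)"
      using h by (simp add: mult.assoc)
  qed
qed

lemma case_big:
  fixes n :: nat and \<alpha> \<beta> :: real
  assumes h1: "n \<ge> 3" and h2: "\<beta> \<ge> 0" and h3: "0 < \<alpha> + \<beta>" and h4: "\<alpha> + \<beta> < real n - \<beta>"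
    and h5: "(real n - \<alpha> - 2 * \<beta>) / (2 * real n) + (real n - \<alpha>) / (2 * (real n - 1)) < 1"
    and al: "\<alpha> > 1"
  shows "(\<lambda>l. A_coeff n \<alpha> \<beta> l) \<in> O(\<lambda>l. real l powr (- 1 - qexp n \<alpha> \<beta> * \<beta>))"
proof -
  note pf = param_facts[OF h1 h2 h3 h4 h5]
  define q where "q = qexp n \<alpha> \<beta>"
  define g where "g = q * (\<alpha> + \<beta> - 1)"
  have q2: "q > 2" unfolding q_def using pf by simp
  have qb: "q * \<beta> \<ge> 0" using q2 h2 by simp
  define b where "b = \<alpha> / 2"
  have bh: "b > 1/2" unfolding b_def using al by simp
  define c0 where "c0 = real n / 2"
  have n1: "n \<ge> 1" using h1 by simp
  have c01: "c0 \<ge> 1" unfolding c0_def using h1 by simp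
  have c0p: "c0 > 0" using c01 by simp
  obtain K1 where K1: "K1 > 0" and K1B: "\<forall>c t. c \<ge> c0 \<longrightarrow> 0 \<le> t \<longrightarrow> t < 1 \<longrightarrow>
     1 \<le> hypergeom (c - 1 + b) b c t \<and>
     hypergeom (c - 1 + b) b c t \<le> K1 * ((1 - t) powr (- b) + c powr (1 - b) * (1 - t) powr (1 - 2 * b))"
    using FB2[OF c01 bh] by (elim exE conjE) (rule that)
  obtain KG where KG: "KG > 0" and KGB: "\<forall>t. 0 \<le> t \<longrightarrow> t < 1 \<longrightarrow> 1 \<le> hypergeom (c0 - 1 + b) b c0 t \<and> hypergeom (c0 - 1 + b) b c0 t \<le> KG * (1 - t) powr (1 - 2 * b)"
    using GB_gt[OF c01 bh] by (elim exE conjE) (rule that)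
  obtain KR where KR: "KR > 0" and KRB: "\<forall>l::nat. Gamma (real l + (real n - \<alpha>) / 2) ^ 2 / Gamma (real l + real n / 2) ^ 2
      \<le> KR * (real l + (real n - \<alpha>) / 2) powr (- \<alpha>)"
    using R_bound[OF pf(5) n1] by (elim exE conjE) (rule that)
  define p1 where "p1 = q * \<beta> + \<alpha> - 2"
  define p2 where "p2 = q * \<beta>"
  have p1g: "p1 > -1" unfolding p1_def using al qb by simp
  have p2g: "p2 > -1" unfolding p2_def using qb by simp
  obtain KB1 where KB1: "KB1 > 0" and KB1B: "\<forall>x\<ge>c0. Beta x (p1 + 1) \<le> KB1 * x powr (- (p1 + 1))"
    using BB[OF p1g c0p] by (elim exE conjE) (rule that)
  obtain KB2 where KB2: "KB2 > 0" and KB2B: "\<forall>x\<ge>c0. Beta x (p2 + 1) \<le> KB2 * x powr (- (p2 + 1))"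
    using BB[OF p2g c0p] by (elim exE conjE) (rule that)
  define m where "m = 2 * Dz n \<beta> powr (q - 2) * KG powr (q - 2) * K1 ^ 2"
  have m0: "m \<ge> 0" unfolding m_def by simp
  define C where "C = KR * (1 + (real n - \<alpha>) / 2) powr \<bar>\<alpha>\<bar> * (m * KB1 * (1 + real n / 2) powr \<bar>0 - p1 - 1\<bar> + m * KB2 * (1 + real n / 2) powr \<bar>(2 - \<alpha>) - p2 - 1\<bar>)"
  show ?thesis
  proof (rule bigO_from_bound[of _ C])
    fix l :: nat assume l: "l \<ge> 1"
    define c where "c = real l + real n / 2"
    have cc0: "c \<ge> c0" unfolding c_def c0_def by simp
    have cp: "c > 0" using cc0 c0p by simp
    have pw: "\<bar>integrand n \<alpha> \<beta> l t\<bar> \<le> m * (t powr (real n / 2 + real l - 1) * (1 - t) powr p1)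
        + m * c powr (2 - \<alpha>) * (t powr (real n / 2 + real l - 1) * (1 - t) powr p2)" if t0: "0 < t" and t1: "t < 1" for t
    proof -
      define s where "s = 1 - t"
      have sp: "s > 0" unfolding s_def using t1 by simp
      have Gb: "1 \<le> hypergeom (c0 - 1 + b) b c0 t" "hypergeom (c0 - 1 + b) b c0 t \<le> KG * s powr (1 - 2 * b)"
        using KGB t0 t1 unfolding s_def by auto
      have Fb: "1 \<le> hypergeom (c - 1 + b) b c t" "hypergeom (c - 1 + b) b c t \<le> K1 * (s powr (- b) + c powr (1 - b) * s powr (1 - 2 * b))"
        using K1B cc0 t0 t1 unfolding s_def by auto
      have Fabs: "\<bar>hypergeom (c - 1 + b) b c t\<bar> \<le> K1 * (s powr (- b) + c powr (1 - b) * s powr (1 - 2 * b))"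
        using Fb by simp
      have P: "\<bar>integrand n \<alpha> \<beta> l t\<bar> \<le> Dz n \<beta> powr (q - 2) * (KG * s powr (1 - 2 * b)) powr (q - 2) * (K1 * (s powr (- b) + c powr (1 - b) * s powr (1 - 2 * b))) ^ 2
            * (t powr (real n / 2 + real l - 1) * s powr g)"
        unfolding q_def g_def s_def
        by (rule PW[OF n1 t0 t1 pf(2)]) (use Gb Fabs in \<open>simp_all add: c0_def b_def c_def s_def\<close>)
      have sq: "(K1 * (s powr (- b) + c powr (1 - b) * s powr (1 - 2 * b))) ^ 2 \<le> 2 * K1 ^ 2 * (s powr (- \<alpha>) + c powr (2 - \<alpha>) * s powr (2 - 2 * \<alpha>))"
      proof -
        have "(K1 * (s powr (- b) + c powr (1 - b) * s powr (1 - 2 * b))) ^ 2 = K1 ^ 2 * (s powr (- b) + c powr (1 - b) * s powr (1 - 2 * b)) ^ 2"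
          by (simp add: power_mult_distrib)
        also have "\<dots> \<le> K1 ^ 2 * (2 * ((s powr (- b)) ^ 2 + (c powr (1 - b) * s powr (1 - 2 * b)) ^ 2))"
          by (intro mult_left_mono sq_sum_le) simp
        also have "(s powr (- b)) ^ 2 = s powr (- \<alpha>)" using sp by (simp add: powr_sq b_def)
        also have "(c powr (1 - b) * s powr (1 - 2 * b)) ^ 2 = c powr (2 - \<alpha>) * s powr (2 - 2 * \<alpha>)"
          using sp cp by (simp add: power_mult_distrib powr_sq b_def algebra_simps)
        finally show ?thesis by (simp add: algebra_simps)
      qed
      have gp: "(KG * s powr (1 - 2 * b)) powr (q - 2) = KG powr (q - 2) * s powr ((1 - 2 * b) * (q - 2))"
        by (rule powr_cs[OF KG sp])
      have x0: "0 \<le> Dz n \<beta> powr (q - 2) * (KG powr (q - 2) * s powr ((1 - 2 * b) * (q - 2)))" by simp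
      have y0: "0 \<le> t powr (real n / 2 + real l - 1) * s powr g" by simp
      have P2: "\<bar>integrand n \<alpha> \<beta> l t\<bar> \<le> Dz n \<beta> powr (q - 2) * (KG powr (q - 2) * s powr ((1 - 2 * b) * (q - 2))) *
             (2 * K1 ^ 2 * (s powr (- \<alpha>) + c powr (2 - \<alpha>) * s powr (2 - 2 * \<alpha>))) * (t powr (real n / 2 + real l - 1) * s powr g)"
        using P mult_right_mono[OF mult_left_mono[OF sq x0] y0] unfolding gp by linarith
      have e1: "s powr ((1 - 2 * b) * (q - 2)) * s powr (- \<alpha>) * s powr g = s powr p1"
        unfolding p1_def g_def b_def by (simp add: powr_add[symmetric] algebra_simps)
      have e2: "s powr ((1 - 2 * b) * (q - 2)) * s powr (2 - 2 * \<alpha>) * s powr g = s powr p2"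
        unfolding p2_def g_def b_def by (simp add: powr_add[symmetric] algebra_simps)
      have E: "Dz n \<beta> powr (q - 2) * (KG powr (q - 2) * s powr ((1 - 2 * b) * (q - 2))) *
             (2 * K1 ^ 2 * (s powr (- \<alpha>) + c powr (2 - \<alpha>) * s powr (2 - 2 * \<alpha>))) * (t powr (real n / 2 + real l - 1) * s powr g)
          = m * (t powr (real n / 2 + real l - 1) * (s powr ((1 - 2 * b) * (q - 2)) * s powr (- \<alpha>) * s powr g))
            + m * c powr (2 - \<alpha>) * (t powr (real n / 2 + real l - 1) * (s powr ((1 - 2 * b) * (q - 2)) * s powr (2 - 2 * \<alpha>) * s powr g))"
        unfolding m_def by (simp only: mult_ac distrib_left distrib_right)
      have "\<bar>integrand n \<alpha> \<beta> l t\<bar> \<le> m * (t powr (real n / 2 + real l - 1) * s powr p1)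
        + m * c powr (2 - \<alpha>) * (t powr (real n / 2 + real l - 1) * s powr p2)"
        using P2 E unfolding e1 e2 by linarith
      then show ?thesis unfolding s_def .
    qed
    have Ab: "\<bar>A_coeff n \<alpha> \<beta> l\<bar> \<le> KR * (real l + (real n - \<alpha>) / 2) powr (- \<alpha>) *
       (m * Beta (real l + real n / 2) (p1 + 1) + m * c powr (2 - \<alpha>) * Beta (real l + real n / 2) (p2 + 1))"
      by (rule A_generic[OF n1 KRB[rule_format] p1g p2g _ _ pw]) (use m0 cp in simp_all)
    have Ab': "\<bar>A_coeff n \<alpha> \<beta> l\<bar> \<le> KR * (real l + (real n - \<alpha>) / 2) powr (- \<alpha>) *
       (m * c powr 0 * Beta c (p1 + 1) + m * c powr (2 - \<alpha>) * Beta c (p2 + 1))"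
      using Ab cp unfolding c_def by simp
    have E1: "0 - p1 - 1 - \<alpha> \<le> - 1 - q * \<beta>" unfolding p1_def using al by simp
    have E2: "(2 - \<alpha>) - p2 - 1 - \<alpha> \<le> - 1 - q * \<beta>" unfolding p2_def using al by simp
    show "\<bar>A_coeff n \<alpha> \<beta> l\<bar> \<le> C * real l powr (- 1 - qexp n \<alpha> \<beta> * \<beta>)"
      unfolding C_def q_def[symmetric]
      by (rule finish[OF l refl _ c_def _ _ m0 m0 _ _ Ab' KB1B[rule_format, OF cc0] KB2B[rule_format, OF cc0] E1 E2])
         (use h1 pf(5) KR KB1 KB2 in \<open>simp_all\<close>)
  qed
qed

theorem lemma2p8:
  fixes n :: nat and \<alpha> \<beta> :: real
  assumes "n \<ge> 3" and "\<beta> \<ge> 0" and "0 < \<alpha> + \<beta>" and "\<alpha> + \<beta> < real n - \<beta>"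
    and "(real n - \<alpha> - 2 * \<beta>) / (2 * real n) + (real n - \<alpha>) / (2 * (real n - 1)) < 1"
  shows "(\<alpha> < 1 \<longrightarrow> (\<lambda>l. A_coeff n \<alpha> \<beta> l)
             \<in> O(\<lambda>l. real l powr (- (1 + qexp n \<alpha> \<beta> * (\<alpha> + \<beta> - 1)))))
       \<and> (\<alpha> = 1 \<longrightarrow> (\<forall>\<epsilon>>0. (\<lambda>l. A_coeff n \<alpha> \<beta> l)
             \<in> O(\<lambda>l. real l powr (- 1 - qexp n \<alpha> \<beta> * \<beta> + \<epsilon>))))
       \<and> (\<alpha> > 1 \<longrightarrow> (\<lambda>l. A_coeff n \<alpha> \<beta> l)
             \<in> O(\<lambda>l. real l powr (- 1 - qexp n \<alpha> \<beta> * \<beta>)))"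
proof (intro conjI impI allI)
  assume a: "\<alpha> < 1"
  show "(\<lambda>l. A_coeff n \<alpha> \<beta> l) \<in> O(\<lambda>l. real l powr (- (1 + qexp n \<alpha> \<beta> * (\<alpha> + \<beta> - 1))))"
  proof (cases "\<alpha> \<le> 0")
    case True
    then show ?thesis by (rule case_nonpos[OF assms])
  next
    case False
    then have "0 < \<alpha>" by simp
    then show ?thesis by (rule case_small[OF assms _ a])
  qed
next
  fix \<epsilon> :: real
  assume a: "\<alpha> = 1" and e: "\<epsilon> > 0"
  show "(\<lambda>l. A_coeff n \<alpha> \<beta> l) \<in> O(\<lambda>l. real l powr (- 1 - qexp n \<alpha> \<beta> * \<beta> + \<epsilon>))"
    by (rule case_one[OF assms a e])
next
  assume a: "\<alpha> > 1"
  show "(\<lambda>l. A_coeff n \<alpha> \<beta> l) \<in> O(\<lambda>l. real l powr (- 1 - qexp n \<alpha> \<beta> * \<beta>))"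
    by (rule case_big[OF assms a])
qed

end
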